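(* Let $G=(V,\mathcal E,w)$ be an undirected, connected, weighted graph on $n$ nodes. Let: - $E\in\mathbb R^{n\times|\mathcal E|}$ be its signed incidence matrix (arbitrary orientation); - $W=\mathrm{diag}(w(e))$; - $L=EWE^T$, with largest eigenvalue $\lambda_n$. Let $\tau\ge0$ with $\tau\lambda_n<\pi/2$. Consider the consensus network with measurement noise on the links, $$\dot x(t)=-L\,x(t-\tau)-E\,\xi(t),\qquad y=M_nx,$$ where $(\xi_e)_{e\in\mathcal E}$ are mutually independent zero-mean Gaussian white noises with intensities $\sigma_e^2$. Then for every link $e=\{i,j\}\in\mathcal E$, $$\nu_e=\frac12\,r_e\Big(L\cos(\tau L)^{-1}\big(M_n-\sin(\tau L)\big)\Big).$$
   Context: Notation: - $M_n=I_n-\frac1n\mathbf1\mathbf1^T$. - $X^\dagger$ is the Moore–Penrose pseudo-inverse. - $\cos(X)$ and $\sin(X)$ are the matrix power-series functions; $\cos(\tau L)$ is invertible since $\tau\lambda_n<\pi/2$. - For a symmetric matrix $X$ and $e=\{i,j\}$, $r_e(X)=[X^\dagger]_{ii}+[X^\dagger]_{jj}-2[X^\dagger]_{ij}$. The performance is $$\rho_{ss}=\lim_{t\to\infty}\mathbb E[y^Ty]=\frac1{2\pi}\int\mathrm{Tr}[G(j\omega)^HG(j\omega)]d\omega,\qquad G(s)=M_n(sI+e^{-\tau s}L)^{-1}(-E)\,\mathrm{diag}(\sigma_e).$$ The link centrality is $\nu_e=\partial\rho_{ss}/\partial\sigma_e^2$. *)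

theory Defs
  imports "HOL-Analysis.Analysis"
begin

text \<open>Each edge e is the unordered pair {src e, tgt e}; the pair (src e, tgt e) is an
  arbitrary orientation.\<close>

definition wgraph :: "('e::finite \<Rightarrow> 'n::finite) \<Rightarrow> ('e \<Rightarrow> 'n) \<Rightarrow> ('e \<Rightarrow> real) \<Rightarrow> bool" where
  "wgraph src tgt w \<longleftrightarrow>
     (\<forall>e. src e \<noteq> tgt e) \<and>
     (\<forall>e f. {src e, tgt e} = {src f, tgt f} \<longrightarrow> e = f) \<and>
     (\<forall>e. w e > 0)"

definition adjacent :: "('e::finite \<Rightarrow> 'n::finite) \<Rightarrow> ('e \<Rightarrow> 'n) \<Rightarrow> 'n \<Rightarrow> 'n \<Rightarrow> bool" where
  "adjacent src tgt i j \<longleftrightarrow> (\<exists>e. {src e, tgt e} = {i, j})"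

definition connected_graph :: "('e::finite \<Rightarrow> 'n::finite) \<Rightarrow> ('e \<Rightarrow> 'n) \<Rightarrow> bool" where
  "connected_graph src tgt \<longleftrightarrow> (\<forall>i j. (adjacent src tgt)\<^sup>*\<^sup>* i j)"

definition incidence :: "('e::finite \<Rightarrow> 'n::finite) \<Rightarrow> ('e \<Rightarrow> 'n) \<Rightarrow> real^'e^'n" where
  "incidence src tgt = (\<chi> i e. if i = src e then 1 else if i = tgt e then -1 else 0)"

definition diagm :: "('a::zero ^'n) \<Rightarrow> 'a^'n^'n" where
  "diagm d = (\<chi> i j. if i = j then d $ j else 0)"

definition laplacian :: "('e::finite \<Rightarrow> 'n::finite) \<Rightarrow> ('e \<Rightarrow> 'n) \<Rightarrow> ('e \<Rightarrow> real) \<Rightarrow> real^'n^'n" where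
  "laplacian src tgt w =
     incidence src tgt ** diagm (\<chi> e. w e) ** transpose (incidence src tgt)"

definition is_eigenvalue :: "real^'n^'n \<Rightarrow> real \<Rightarrow> bool" where
  "is_eigenvalue A l \<longleftrightarrow> (\<exists>x. x \<noteq> 0 \<and> A *v x = l *\<^sub>R x)"

definition lambda_max :: "real^'n::finite^'n \<Rightarrow> real" where
  "lambda_max A = Max {l. is_eigenvalue A l}"

definition centering :: "real^'n::finite^'n" where
  "centering = (\<chi> i j. (if i = j then 1 else 0) - 1 / real CARD('n))"

definition mpow :: "'a::semiring_1^'n::finite^'n \<Rightarrow> nat \<Rightarrow> 'a^'n^'n" where
  "mpow X k = ((\<lambda>Y. X ** Y) ^^ k) (mat 1)"

definition mat_cos :: "real^'n::finite^'n \<Rightarrow> real^'n^'n" where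
  "mat_cos X = (\<Sum>k. ((-1) ^ k / fact (2 * k)) *\<^sub>R mpow X (2 * k))"

definition mat_sin :: "real^'n::finite^'n \<Rightarrow> real^'n^'n" where
  "mat_sin X = (\<Sum>k. ((-1) ^ k / fact (2 * k + 1)) *\<^sub>R mpow X (2 * k + 1))"

definition pinv :: "real^'m::finite^'n::finite \<Rightarrow> real^'n^'m" where
  "pinv A = (THE X. A ** X ** A = A \<and> X ** A ** X = X \<and>
                    transpose (A ** X) = A ** X \<and> transpose (X ** A) = X ** A)"

definition eff_res :: "real^'n::finite^'n \<Rightarrow> 'n \<Rightarrow> 'n \<Rightarrow> real" where
  "eff_res X i j = pinv X $ i $ i + pinv X $ j $ j - 2 * pinv X $ i $ j"

definition cmat :: "real^'m::finite^'n::finite \<Rightarrow> complex^'m^'n" where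
  "cmat A = map_matrix complex_of_real A"

definition cadj :: "complex^'m::finite^'n::finite \<Rightarrow> complex^'n^'m" where
  "cadj A = (\<chi> i j. cnj (A $ j $ i))"

text \<open>Transfer function G(s) = M_n (sI + e^{-tau s} L)^{-1} (-E) diag(sigma_e),
  with sigma_e = sqrt of the noise intensity v e = sigma_e^2.\<close>
definition transfer ::
  "('e::finite \<Rightarrow> 'n::finite) \<Rightarrow> ('e \<Rightarrow> 'n) \<Rightarrow> ('e \<Rightarrow> real) \<Rightarrow> real \<Rightarrow> ('e \<Rightarrow> real)
     \<Rightarrow> complex \<Rightarrow> complex^'e^'n" where
  "transfer src tgt w \<tau> v s =
     cmat centering **
     matrix_inv (\<chi> i j. (if i = j then s else 0)
                    + exp (- (complex_of_real \<tau> * s)) * complex_of_real (laplacian src tgt w $ i $ j))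
     ** cmat (- incidence src tgt) ** cmat (diagm (\<chi> e. sqrt (v e)))"

definition rho_ss ::
  "('e::finite \<Rightarrow> 'n::finite) \<Rightarrow> ('e \<Rightarrow> 'n) \<Rightarrow> ('e \<Rightarrow> real) \<Rightarrow> real \<Rightarrow> ('e \<Rightarrow> real) \<Rightarrow> real" where
  "rho_ss src tgt w \<tau> v =
     1 / (2 * pi) * integral UNIV (\<lambda>\<omega>::real.
        Re (trace (cadj (transfer src tgt w \<tau> v (\<i> * complex_of_real \<omega>))
                   ** transfer src tgt w \<tau> v (\<i> * complex_of_real \<omega>))))"

end

theory Submission
  imports Defs "HOL-Complex_Analysis.Complex_Analysis"
begin

definition aa :: "real \<Rightarrow> real \<Rightarrow> complex \<Rightarrow> complex" where
  "aa m t s = s + of_real m * exp (- (of_real t * s))"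

lemma delta_exists:
  fixes m t :: real
  assumes m: "m > 0" and t: "t \<ge> 0" and tm: "t * m < pi / 2"
  shows "\<exists>\<delta>>0. t * m * exp (t * \<delta>) < pi / 2 \<and> \<delta> < m * cos (t * m * exp (t * \<delta>))"
proof -
  have c1: "((\<lambda>\<delta>. t * m * exp (t * \<delta>)) \<longlongrightarrow> t * m * exp (t * 0)) (at_right 0)"
    by (intro tendsto_intros)
  have c2: "((\<lambda>\<delta>. m * cos (t * m * exp (t * \<delta>)) - \<delta>) \<longlongrightarrow> m * cos (t * m * exp (t * 0)) - 0) (at_right 0)"
    by (intro tendsto_intros)
  have "cos (t * m) > 0"
  proof (rule cos_gt_zero_pi)
    have "t * m \<ge> 0" using t m by simp
    thus "- (pi / 2) < t * m" using pi_gt_zero by linarith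
  qed (use tm in auto)
  hence p2: "m * cos (t * m * exp (t * 0)) - 0 > 0" using m by simp
  have p1: "t * m * exp (t * 0) < pi / 2" using tm by simp
  have ev: "\<forall>\<^sub>F \<delta> in at_right (0::real). 0 < \<delta> \<and> t * m * exp (t * \<delta>) < pi / 2 \<and> 0 < m * cos (t * m * exp (t * \<delta>)) - \<delta>"
    using order_tendstoD(2)[OF c1 p1] order_tendstoD(1)[OF c2 p2] eventually_at_right_less[of 0]
    by eventually_elim auto
  then obtain \<delta> where "0 < \<delta> \<and> t * m * exp (t * \<delta>) < pi / 2 \<and> 0 < m * cos (t * m * exp (t * \<delta>)) - \<delta>"
    using eventually_happens trivial_limit_at_right_real by blast
  thus ?thesis by auto
qed

lemma aa_nz:
  fixes m t \<delta> :: real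
  assumes m: "m > 0" and t: "t \<ge> 0" and d1: "t * m * exp (t * \<delta>) < pi / 2"
    and d2: "\<delta> < m * cos (t * m * exp (t * \<delta>))" and d0: "\<delta> > 0" and u: "Re u \<ge> - \<delta>"
  shows "aa m t u \<noteq> 0"
proof
  assume "aa m t u = 0"
  hence ue: "u = - (of_real m * exp (- (of_real t * u)))" unfolding aa_def by (simp add: add_eq_0_iff)
  define x where "x = Re u"
  define y where "y = Im u"
  have nu: "cmod u = m * exp (- t * x)"
    using m by (subst ue) (simp add: norm_mult x_def)
  have "t * (- x) \<le> t * \<delta>" using t u unfolding x_def by (intro mult_left_mono) auto
  hence "exp (- t * x) \<le> exp (t * \<delta>)" by simp
  hence "\<bar>y\<bar> \<le> m * exp (t * \<delta>)"
  proof -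
    have "m * exp (- t * x) \<le> m * exp (t * \<delta>)" using m \<open>exp (- t * x) \<le> exp (t * \<delta>)\<close> by simp
    thus ?thesis using abs_Im_le_cmod[of u] nu unfolding y_def by linarith
  qed
  hence ty: "\<bar>t * y\<bar> \<le> t * m * exp (t * \<delta>)"
    using t by (simp add: abs_mult mult_left_mono mult.assoc)
  have "cos (t * m * exp (t * \<delta>)) \<le> cos \<bar>t * y\<bar>"
    using ty d1 by (intro cos_monotone_0_pi_le) auto
  hence cy: "cos (t * m * exp (t * \<delta>)) \<le> cos (t * y)" by simp
  have rx: "x = - (m * exp (- t * x) * cos (t * y))"
    unfolding x_def y_def by (subst ue) (simp add: Re_exp Im_exp)
  have "m * cos (t * m * exp (t * \<delta>)) > 0" using d2 d0 by linarith
  hence "cos (t * m * exp (t * \<delta>)) > 0" using m by (simp add: zero_less_mult_iff)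
  hence "cos (t * y) > 0" using cy by linarith
  hence "m * exp (- t * x) * cos (t * y) > 0" using m by simp
  hence "x < 0" using rx by linarith
  hence "exp (- t * x) \<ge> 1" using t by (simp add: mult_nonneg_nonpos)
  hence "m * cos (t * y) * 1 \<le> m * cos (t * y) * exp (- t * x)" using m \<open>cos (t * y) > 0\<close>
    by (intro mult_left_mono) auto
  hence "- x \<ge> m * cos (t * y)" using rx by (simp add: algebra_simps)
  also have "m * cos (t * y) \<ge> m * cos (t * m * exp (t * \<delta>))" using cy m by simp
  finally show False using d2 u x_def by linarith
qed

definition FF :: "real \<Rightarrow> real \<Rightarrow> complex \<Rightarrow> complex" where
  "FF m t s = 1 / (aa m t s * aa m t (- s))"
definition TT1 :: "real \<Rightarrow> real \<Rightarrow> complex \<Rightarrow> complex" where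
  "TT1 m t s = - s / ((s^2 + (of_real m)^2) * aa m t s)"
definition qq :: "real \<Rightarrow> real \<Rightarrow> complex \<Rightarrow> complex" where
  "qq m t s = of_real m * exp (of_real t * s) / aa m t (- s)"
definition TT2 :: "real \<Rightarrow> real \<Rightarrow> complex \<Rightarrow> complex" where
  "TT2 m t s = (qq m t s / (s - \<i> * of_real m) - qq m t s / (s + \<i> * of_real m)) / (2 * \<i> * of_real m)"

lemma TT2_alt:
  assumes "m > 0" "s \<noteq> \<i> * of_real m" "s \<noteq> - (\<i> * of_real m)"
  shows "TT2 m t s = qq m t s / (s^2 + (of_real m)^2)"
proof -
  have a: "s - \<i> * of_real m \<noteq> 0" "s + \<i> * of_real m \<noteq> 0" using assms
    by (auto simp: add_eq_0_iff)
  have b: "s^2 + (of_real m)^2 = (s - \<i> * of_real m) * (s + \<i> * of_real m)"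
    by (simp add: algebra_simps power2_eq_square)
  have c: "1 / (s - \<i> * of_real m) - 1 / (s + \<i> * of_real m) = (2 * \<i> * of_real m) / ((s - \<i> * of_real m) * (s + \<i> * of_real m))"
    using a by (simp add: field_simps)
  have "TT2 m t s = qq m t s * (1 / (s - \<i> * of_real m) - 1 / (s + \<i> * of_real m)) / (2 * \<i> * of_real m)"
    unfolding TT2_def by (simp add: algebra_simps)
  also have "\<dots> = qq m t s / ((s - \<i> * of_real m) * (s + \<i> * of_real m))"
    unfolding c using assms(1) by simp
  finally show ?thesis unfolding b .
qed

lemma frac_add3:
  fixes a b x y z :: complex
  assumes "x \<noteq> 0" "y \<noteq> 0" "z \<noteq> 0"
  shows "a / (x * y) + b / (z * x) = (a * z + b * y) / (x * y * z)"
  using assms by (simp add: field_simps)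

lemma FF_split:
  assumes m: "m > 0" and nz: "aa m t s \<noteq> 0" "aa m t (- s) \<noteq> 0"
    and s: "s \<noteq> \<i> * of_real m" "s \<noteq> - (\<i> * of_real m)"
  shows "FF m t s = TT1 m t s + TT2 m t s"
proof -
  have a: "s - \<i> * of_real m \<noteq> 0" "s + \<i> * of_real m \<noteq> 0" using s
    by (auto simp: add_eq_0_iff)
  have b: "s^2 + (of_real m)^2 = (s - \<i> * of_real m) * (s + \<i> * of_real m)"
    by (simp add: algebra_simps power2_eq_square)
  have c: "s^2 + (of_real m)^2 \<noteq> 0" unfolding b using a by simp
  have e: "exp (of_real t * s) * exp (- (of_real t * s)) = 1"
    by (simp add: exp_minus_inverse)
  have num: "- s * aa m t (- s) + of_real m * exp (of_real t * s) * aa m t s = s^2 + (of_real m)^2"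
    unfolding aa_def using e by (simp add: algebra_simps power2_eq_square)
  define P where "P = s^2 + (of_real m)^2"
  define A where "A = aa m t s"
  define B where "B = aa m t (- s)"
  define E where "E = exp (of_real t * s)"
  have "TT1 m t s + TT2 m t s = - s / (P * A) + of_real m * E / (B * P)"
    unfolding TT2_alt[OF m s] TT1_def qq_def P_def A_def B_def E_def by simp
  also have "\<dots> = (- s * B + of_real m * E * A) / (P * A * B)"
    by (rule frac_add3) (use c nz in \<open>auto simp: P_def A_def B_def\<close>)
  also have "\<dots> = P / (P * A * B)" using num unfolding P_def A_def B_def E_def by simp
  also have "\<dots> = FF m t s" unfolding FF_def A_def B_def P_def using c by simp
  finally show ?thesis by simp
qed

lemma aa_lower:
  shows "cmod (aa m t s) \<ge> cmod s - \<bar>m\<bar> * exp (- t * Re s)"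
proof -
  have "cmod (of_real m * exp (- (of_real t * s))) = \<bar>m\<bar> * exp (- t * Re s)"
    by (simp add: norm_mult)
  thus ?thesis unfolding aa_def using norm_diff_ineq[of s "of_real m * exp (- (of_real t * s))"]
    by simp
qed

lemma aa_half_pos:
  assumes m: "m > 0" and t: "t \<ge> 0" and "Re s \<ge> 0" and "cmod s \<ge> 2 * m"
  shows "cmod (aa m t s) \<ge> cmod s / 2"
proof -
  have "exp (- (t * Re s)) \<le> 1" using assms by (simp add: mult_nonneg_nonneg)
  hence h: "m * exp (- (t * Re s)) \<le> m" using m by (simp add: mult_left_le)
  have l: "cmod (aa m t s) \<ge> cmod s - m * exp (- (t * Re s))" using aa_lower[of s m t] m by simp
  show ?thesis using h l assms by linarith
qed

lemma aa_half_neg: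
  assumes m: "m > 0" and t: "t \<ge> 0" and "Re s \<le> \<delta>" and "cmod s \<ge> 2 * (m * exp (t * \<delta>))"
  shows "cmod (aa m t (- s)) \<ge> cmod s / 2"
proof -
  have "t * Re s \<le> t * \<delta>" using assms by (intro mult_left_mono) auto
  hence "exp (t * Re s) \<le> exp (t * \<delta>)" by simp
  hence h: "m * exp (t * Re s) \<le> m * exp (t * \<delta>)" using m by simp
  have l: "cmod (aa m t (- s)) \<ge> cmod s - m * exp (t * Re s)" using aa_lower[of "- s" m t] m by simp
  show ?thesis using h l assms by linarith
qed

lemma K_ge_m:
  fixes m t \<delta> :: real
  assumes "m > 0" "t \<ge> 0" "\<delta> > 0" shows "m \<le> m * exp (t * \<delta>)"
proof -
  have "0 \<le> t * \<delta>" by (rule mult_nonneg_nonneg) (use assms in auto)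
  hence "1 \<le> exp (t * \<delta>)" by simp
  thus ?thesis using mult_left_mono[of 1 "exp (t * \<delta>)" m] assms by simp
qed

lemma inv_prod_bound:
  fixes x y r :: real
  assumes "x \<ge> r / 2" "y \<ge> r / 2" "r > 0"
  shows "1 / (x * y) \<le> 4 / r^2"
proof -
  have "1 / (x * y) \<le> 1 / ((r/2) * (r/2))"
    using assms by (intro divide_left_mono mult_mono mult_pos_pos) auto
  thus ?thesis by (simp add: power2_eq_square)
qed

lemma bnd_F:
  assumes m: "m > 0" and t: "t \<ge> 0" and d: "\<delta> > 0" and s: "0 \<le> Re s" "Re s \<le> \<delta>"
    and Y: "cmod s \<ge> 2 * (m * exp (t * \<delta>))"
  shows "cmod (FF m t s) \<le> 4 / (cmod s)^2"
proof -
  have K: "m \<le> m * exp (t * \<delta>)" by (rule K_ge_m) fact+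
  have A: "cmod (aa m t s) \<ge> cmod s / 2" by (rule aa_half_pos; use K Y s m t in linarith)
  have B: "cmod (aa m t (- s)) \<ge> cmod s / 2" by (rule aa_half_neg) (use Y s m t in auto)
  have "cmod s > 0" using Y m K by linarith
  have "cmod (FF m t s) = 1 / (cmod (aa m t s) * cmod (aa m t (- s)))"
    unfolding FF_def by (simp add: norm_divide norm_mult)
  also have "\<dots> \<le> 4 / (cmod s)^2" by (rule inv_prod_bound) (use A B \<open>cmod s > 0\<close> in auto)
  finally show ?thesis .
qed

lemma sq_plus_bound:
  assumes m: "m > 0" and "cmod s \<ge> 2 * m"
  shows "cmod (s^2 + (of_real m)^2) \<ge> (cmod s)^2 / 2"
proof -
  have "cmod (s^2 + (of_real m)^2) \<ge> cmod (s^2) - cmod ((of_real m :: complex)^2)"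
    by (rule norm_diff_ineq)
  moreover have "cmod ((of_real m :: complex)^2) = m^2" using m by (simp add: norm_power)
  moreover have "m^2 \<le> (cmod s)^2 / 4"
  proof -
    have "m \<le> cmod s / 2" using assms by simp
    hence "m^2 \<le> (cmod s / 2)^2" using m by (intro power_mono) auto
    thus ?thesis by (simp add: power_divide)
  qed
  moreover have "cmod (s^2) = (cmod s)^2" by (simp add: norm_power)
  moreover have "(cmod s)^2 \<ge> 0" by simp
  ultimately show ?thesis by linarith
qed

lemma bnd_T1:
  assumes m: "m > 0" and t: "t \<ge> 0" and s: "0 \<le> Re s" and Y: "cmod s \<ge> 2 * m"
  shows "cmod (TT1 m t s) \<le> 4 / (cmod s)^2"
proof -
  have A: "cmod (aa m t s) \<ge> cmod s / 2" using Y s m t by (intro aa_half_pos) auto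
  have P: "cmod (s^2 + (of_real m)^2) \<ge> (cmod s)^2 / 2" using m Y by (rule sq_plus_bound)
  have sp: "cmod s > 0" using Y m by linarith
  have "cmod (TT1 m t s) = cmod s / (cmod (s^2 + (of_real m)^2) * cmod (aa m t s))"
    unfolding TT1_def by (simp add: norm_divide norm_mult)
  also have "\<dots> \<le> cmod s / (((cmod s)^2 / 2) * (cmod s / 2))"
    using A P sp by (intro divide_left_mono mult_mono mult_pos_pos) auto
  also have "\<dots> = 4 / (cmod s)^2" using sp by (simp add: field_simps power2_eq_square)
  finally show ?thesis .
qed

lemma bnd_T2:
  assumes m: "m > 0" and t: "t \<ge> 0" and d: "\<delta> > 0" and s: "Re s \<le> \<delta>"
    and Y: "cmod s \<ge> 2 * (m * exp (t * \<delta>))"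
  shows "cmod (TT2 m t s) \<le> 4 / (cmod s)^2"
proof -
  define K where "K = m * exp (t * \<delta>)"
  have K: "m \<le> K" unfolding K_def by (rule K_ge_m) fact+
  have sp: "cmod s > 0" using Y m K K_def by linarith
  have B: "cmod (aa m t (- s)) \<ge> cmod s / 2" by (rule aa_half_neg) (use Y s m t in auto)
  have s2: "cmod s \<ge> 2 * m" using Y K K_def by linarith
  have P: "cmod (s^2 + (of_real m)^2) \<ge> (cmod s)^2 / 2" by (rule sq_plus_bound) (use m s2 in auto)
  have ne: "s \<noteq> \<i> * of_real m" "s \<noteq> - (\<i> * of_real m)" using s2 m
    by (auto simp: norm_mult)
  have "t * Re s \<le> t * \<delta>" using assms by (intro mult_left_mono) auto
  hence ex: "m * exp (t * Re s) \<le> K" unfolding K_def using m by simp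
  have "cmod (TT2 m t s) = (m * exp (t * Re s)) / (cmod (aa m t (- s)) * cmod (s^2 + (of_real m)^2))"
    unfolding TT2_alt[OF m ne] qq_def using m by (simp add: norm_divide norm_mult)
  also have "\<dots> \<le> K / ((cmod s / 2) * ((cmod s)^2 / 2))"
    using B P sp ex m K by (intro frac_le mult_mono mult_pos_pos) auto
  also have "\<dots> = 4 * K / (cmod s)^3" using sp by (simp add: field_simps power2_eq_square power3_eq_cube)
  also have "\<dots> \<le> 4 / (cmod s)^2"
  proof -
    have "4 * K / (cmod s)^3 = (4 / (cmod s)^2) * (K / cmod s)" using sp
      by (simp add: field_simps power2_eq_square power3_eq_cube)
    also have "\<dots> \<le> (4 / (cmod s)^2) * 1"
    proof (rule mult_left_mono)
      have "m * exp (t * \<delta>) > 0" using m by simp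
      thus "K / cmod s \<le> 1" using Y sp K_def by simp
    qed simp
    finally show ?thesis by simp
  qed
  finally show ?thesis .
qed

lemma rect_split:
  assumes I: "(f has_contour_integral I) (rectpath a1 a3)" and c: "continuous_on S f"
    and S: "path_image (rectpath a1 a3) \<subseteq> S"
  shows "I = contour_integral (linepath a1 (Complex (Re a3) (Im a1))) f
           + contour_integral (linepath (Complex (Re a3) (Im a1)) a3) f
           + contour_integral (linepath a3 (Complex (Re a1) (Im a3))) f
           + contour_integral (linepath (Complex (Re a1) (Im a3)) a1) f"
proof -
  define a2 where "a2 = Complex (Re a3) (Im a1)"
  define a4 where "a4 = Complex (Re a1) (Im a3)"
  have r: "rectpath a1 a3 = linepath a1 a2 +++ linepath a2 a3 +++ linepath a3 a4 +++ linepath a4 a1"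
    unfolding rectpath_def a2_def a4_def Let_def by simp
  have segs: "closed_segment a1 a2 \<subseteq> S" "closed_segment a2 a3 \<subseteq> S"
     "closed_segment a3 a4 \<subseteq> S" "closed_segment a4 a1 \<subseteq> S"
    using S unfolding r by (auto simp: path_image_join)
  have h: "\<And>a b. closed_segment a b \<subseteq> S \<Longrightarrow> (f has_contour_integral contour_integral (linepath a b) f) (linepath a b)"
    by (intro has_contour_integral_integral contour_integrable_continuous_linepath continuous_on_subset[OF c])
  have "(f has_contour_integral (contour_integral (linepath a1 a2) f + (contour_integral (linepath a2 a3) f
      + (contour_integral (linepath a3 a4) f + contour_integral (linepath a4 a1) f)))) (rectpath a1 a3)"
    unfolding r
    by (intro has_contour_integral_join h segs valid_path_join valid_path_linepath) auto
  hence "I = contour_integral (linepath a1 a2) f + (contour_integral (linepath a2 a3) f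
      + (contour_integral (linepath a3 a4) f + contour_integral (linepath a4 a1) f))"
    using I has_contour_integral_unique by blast
  thus ?thesis unfolding a2_def a4_def by (simp add: add.assoc)
qed

lemma edge_bound:
  assumes c: "continuous_on S f" and S: "closed_segment a b \<subseteq> S" and B: "0 \<le> B"
    and b: "\<And>z. z \<in> closed_segment a b \<Longrightarrow> cmod (f z) \<le> B"
  shows "cmod (contour_integral (linepath a b) f) \<le> B * cmod (b - a)"
  by (rule contour_integral_bound_linepath)
     (use contour_integrable_continuous_linepath continuous_on_subset[OF c S] B b in auto)

lemma axis_integral:
  fixes \<phi> :: "real \<Rightarrow> real" and g :: "complex \<Rightarrow> complex"
  assumes J: "(\<phi> has_integral J) {-Y..Y}" and Y: "Y > 0" and g: "\<And>y. g (Complex 0 y) = of_real (\<phi> y)"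
  shows "(g has_contour_integral (\<i> * of_real J)) (linepath (Complex 0 (-Y)) (Complex 0 Y))"
proof -
  have "((\<lambda>x. \<phi> ((2*Y) *\<^sub>R x + (-Y))) has_integral (1 / \<bar>2*Y\<bar> ^ DIM(real)) *\<^sub>R J)
          ((\<lambda>x. (1 / (2*Y)) *\<^sub>R x + - ((1 / (2*Y)) *\<^sub>R (-Y))) ` cbox (-Y) Y)"
    by (rule has_integral_affinity) (use J Y in auto)
  moreover have "(\<lambda>x. (1 / (2*Y)) *\<^sub>R x + - ((1 / (2*Y)) *\<^sub>R (-Y))) ` cbox (-Y) Y = {0..1}"
  proof -
    have "(\<lambda>x. (1 / (2*Y)) *\<^sub>R x + - ((1 / (2*Y)) *\<^sub>R (-Y))) = (\<lambda>x. (1 / (2*Y)) * x + 1/2)"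
      using Y by (auto simp: fun_eq_iff)
    moreover have "(\<lambda>x. (1 / (2*Y)) * x + 1/2) ` {-Y..Y} = {0..1}"
      using Y by (subst image_affinity_atLeastAtMost) auto
    ultimately show ?thesis using Y by simp
  qed
  ultimately have "((\<lambda>x. \<phi> (2 * Y * x - Y)) has_integral J / (2 * Y)) {0..1}"
    using Y by simp
  hence "((\<lambda>x. (2 * Y) * \<phi> (2 * Y * x - Y)) has_integral (2 * Y) * (J / (2 * Y))) {0..1}"
    by (rule has_integral_mult_right)
  hence "((\<lambda>x. (2 * Y) * \<phi> (2 * Y * x - Y)) has_integral J) {0..1}" using Y by simp
  hence "((of_real \<circ> (\<lambda>x. (2 * Y) * \<phi> (2 * Y * x - Y))) has_integral (of_real J :: complex)) {0..1}"
    by (rule has_integral_linear) (rule bounded_linear_of_real)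
  hence "((\<lambda>x. \<i> * (of_real ((2 * Y) * \<phi> (2 * Y * x - Y)))) has_integral \<i> * of_real J) {0..1}"
    unfolding o_def by (rule has_integral_mult_right)
  moreover have "\<And>x. g (linepath (Complex 0 (-Y)) (Complex 0 Y) x) * (Complex 0 Y - Complex 0 (-Y))
       = \<i> * (of_real ((2 * Y) * \<phi> (2 * Y * x - Y)))"
  proof -
    fix x
    have "linepath (Complex 0 (-Y)) (Complex 0 Y) x = Complex 0 (2 * Y * x - Y)"
      by (simp add: linepath_def complex_eq_iff algebra_simps)
    moreover have "Complex 0 Y - Complex 0 (-Y) = \<i> * of_real (2 * Y)"
      by (simp add: complex_eq_iff)
    ultimately show "g (linepath (Complex 0 (-Y)) (Complex 0 Y) x) * (Complex 0 Y - Complex 0 (-Y))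
       = \<i> * (of_real ((2 * Y) * \<phi> (2 * Y * x - Y)))"
      using g by (simp add: algebra_simps)
  qed
  ultimately show ?thesis by (simp add: has_contour_integral_linepath)
qed

lemma aa_holo: "aa m t holomorphic_on A"
  unfolding aa_def by (intro holomorphic_intros)

lemma aa_neg_holo: "(\<lambda>s. aa m t (- s)) holomorphic_on A"
  unfolding aa_def by (intro holomorphic_intros)

lemma FF_holo:
  assumes "\<And>s. s \<in> A \<Longrightarrow> aa m t s \<noteq> 0" "\<And>s. s \<in> A \<Longrightarrow> aa m t (- s) \<noteq> 0"
  shows "FF m t holomorphic_on A"
proof -
  have "(\<lambda>s. 1 / (aa m t s * aa m t (- s))) holomorphic_on A"
    using assms by (intro holomorphic_intros aa_holo aa_neg_holo) auto
  thus ?thesis unfolding FF_def[abs_def] .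
qed

lemma TT1_holo:
  assumes "\<And>s. s \<in> A \<Longrightarrow> aa m t s \<noteq> 0" "\<And>s. s \<in> A \<Longrightarrow> s^2 + (of_real m)^2 \<noteq> 0"
  shows "TT1 m t holomorphic_on A"
proof -
  have "(\<lambda>s. - s / ((s^2 + (of_real m)^2) * aa m t s)) holomorphic_on A"
    using assms by (intro holomorphic_intros aa_holo) auto
  thus ?thesis unfolding TT1_def[abs_def] .
qed

lemma qq_holo:
  assumes "\<And>s. s \<in> A \<Longrightarrow> aa m t (- s) \<noteq> 0"
  shows "qq m t holomorphic_on A"
proof -
  have "(\<lambda>s. of_real m * exp (of_real t * s) / aa m t (- s)) holomorphic_on A"
    using assms by (intro holomorphic_intros aa_neg_holo) auto
  thus ?thesis unfolding qq_def[abs_def] .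
qed

lemma TT2_holo:
  assumes "\<And>s. s \<in> A \<Longrightarrow> aa m t (- s) \<noteq> 0" "m \<noteq> 0"
    "\<i> * of_real m \<notin> A" "- (\<i> * of_real m) \<notin> A"
  shows "TT2 m t holomorphic_on A"
proof -
  have q: "qq m t holomorphic_on A" using assms(1) by (rule qq_holo)
  have "(\<lambda>s. (qq m t s / (s - \<i> * of_real m) - qq m t s / (s + \<i> * of_real m)) / (2 * \<i> * of_real m)) holomorphic_on A"
    using assms(2-4) by (intro holomorphic_intros q) (auto simp: add_eq_0_iff)
  thus ?thesis unfolding TT2_def[abs_def] .
qed

lemma seg_h:
  assumes "Im a = Im b" "z \<in> closed_segment a b"
  shows "Im z = Im a \<and> min (Re a) (Re b) \<le> Re z \<and> Re z \<le> max (Re a) (Re b)"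
  using assms by (auto simp: closed_segment_same_Im closed_segment_eq_real_ivl split: if_splits)

lemma seg_v:
  assumes "Re a = Re b" "z \<in> closed_segment a b"
  shows "Re z = Re a \<and> min (Im a) (Im b) \<le> Im z \<and> Im z \<le> max (Im a) (Im b)"
  using assms by (auto simp: closed_segment_same_Re closed_segment_eq_real_ivl split: if_splits)

lemma edge_bound2:
  assumes c: "continuous_on S f" and S: "closed_segment a b \<subseteq> S" and Y: "Y > 0"
    and L: "cmod (b - a) \<le> 2 * Y"
    and b: "\<And>z. z \<in> closed_segment a b \<Longrightarrow> cmod (f z) \<le> 4 / Y^2"
  shows "cmod (contour_integral (linepath a b) f) \<le> 8 / Y"
proof -
  have "cmod (contour_integral (linepath a b) f) \<le> 4 / Y^2 * cmod (b - a)"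
    by (rule edge_bound[OF c S]) (use b in auto)
  also have "\<dots> \<le> 4 / Y^2 * (2 * Y)" using L by (intro mult_left_mono) auto
  also have "\<dots> = 8 / Y" using Y by (simp add: field_simps power2_eq_square)
  finally show ?thesis .
qed

lemma inv_sq_mono:
  fixes Y r :: real
  assumes "Y > 0" "r \<ge> Y" shows "4 / r^2 \<le> 4 / Y^2"
  using assms by (intro divide_left_mono power_mono mult_pos_pos) auto

lemma hedge:
  assumes "Im a = c" "Im b = c" "\<bar>c\<bar> = Y" "z \<in> closed_segment a b"
  shows "cmod z \<ge> Y \<and> min (Re a) (Re b) \<le> Re z \<and> Re z \<le> max (Re a) (Re b)"
  using seg_h[of a b z] assms abs_Im_le_cmod[of z] by auto

lemma vedge:
  assumes "Re a = c" "Re b = c" "\<bar>c\<bar> = Y" "z \<in> closed_segment a b"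
  shows "cmod z \<ge> Y \<and> min (Im a) (Im b) \<le> Im z \<and> Im z \<le> max (Im a) (Im b) \<and> Re z = c"
  using seg_v[of a b z] assms abs_Re_le_cmod[of z] by auto

lemma FF_edge:
  assumes "m > 0" "t \<ge> 0" "\<delta> > 0" "Y \<ge> 2 * (m * exp (t * \<delta>))" "Y > 0"
    "0 \<le> Re z" "Re z \<le> \<delta>" "cmod z \<ge> Y"
  shows "cmod (FF m t z) \<le> 4 / Y^2"
  using bnd_F[of m t \<delta> z] inv_sq_mono[of Y "cmod z"] assms by auto

lemma T1_edge:
  assumes "m > 0" "t \<ge> 0" "Y \<ge> 2 * m" "Y > 0" "0 \<le> Re z" "cmod z \<ge> Y"
  shows "cmod (TT1 m t z) \<le> 4 / Y^2"
  using bnd_T1[of m t z] inv_sq_mono[of Y "cmod z"] assms by auto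

lemma T2_edge:
  assumes "m > 0" "t \<ge> 0" "\<delta> > 0" "Y \<ge> 2 * (m * exp (t * \<delta>))" "Y > 0"
    "Re z \<le> \<delta>" "cmod z \<ge> Y"
  shows "cmod (TT2 m t z) \<le> 4 / Y^2"
  using bnd_T2[of m t \<delta> z] inv_sq_mono[of Y "cmod z"] assms by auto

lemma lp_rev: "contour_integral (linepath a b) f = - contour_integral (linepath b a) f"
  by (metis contour_integral_reversepath reversepath_linepath valid_path_linepath)

lemma lin_comb:
  fixes ax :: "'a::ab_group_add"
  assumes "e01 + vf + e03 + l0 = 0" "b1 + r1 + t1 + l1 = 0" "w = b2 + v2 + t2 + l2" "vf = v1 + v2"
    "ax = - l0" "l1 = - v1"
  shows "ax - w = e01 + e03 + b1 + r1 + t1 - b2 - t2 - l2"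
proof -
  have a: "l0 = - (e01 + vf + e03)" using assms(1) by (simp add: add_eq_0_iff)
  have b: "v1 = b1 + r1 + t1" using assms(2,6) by (simp add: add_eq_0_iff)
  show ?thesis unfolding assms(5) a assms(3) assms(4) b by (simp add: algebra_simps)
qed

definition WW :: "real \<Rightarrow> real \<Rightarrow> complex" where
  "WW m t = (qq m t (\<i> * of_real m) - qq m t (- (\<i> * of_real m))) / (2 * \<i> * of_real m)"

lemma axis_estimate:
  fixes m t \<delta> Y :: real
  assumes m: "m > 0" and t: "t \<ge> 0" and d0: "\<delta> > 0"
    and nz: "\<And>u. Re u \<ge> - \<delta> \<Longrightarrow> aa m t u \<noteq> 0"
    and Y: "Y \<ge> 2 * (m * exp (t * \<delta>)) + \<delta> + m + 1"
  shows "cmod (contour_integral (linepath (Complex 0 (-Y)) (Complex 0 Y)) (FF m t) - 2 * pi * \<i> * WW m t) \<le> 64 / Y"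
proof -
  define d where "d = \<delta> / 2"
  define K where "K = m * exp (t * \<delta>)"
  have Km: "m \<le> K" unfolding K_def by (rule K_ge_m) fact+
  have d: "0 < d" "d < \<delta>" using d0 by (auto simp: d_def)
  have Yp: "Y > 0" and YK: "2 * K \<le> Y" and Ym: "2 * m \<le> Y" and Yd: "\<delta> < Y" and Ym': "m < Y"
    using Y Km m d0 unfolding K_def by linarith+
  have nzm: "\<And>u. Re u \<le> \<delta> \<Longrightarrow> aa m t (- u) \<noteq> 0" using nz by force
  define S0 where "S0 = {s. - \<delta> < Re s} \<inter> {s. Re s < \<delta>}"
  have cS0: "convex S0" unfolding S0_def by (intro convex_Int convex_halfspace_Re_gt convex_halfspace_Re_lt)
  have hF: "FF m t holomorphic_on S0" by (rule FF_holo) (use nz nzm in \<open>auto simp: S0_def\<close>)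
  have sub0: "path_image (rectpath (Complex 0 (-Y)) (Complex d Y)) \<subseteq> S0"
  proof -
    have "path_image (rectpath (Complex 0 (-Y)) (Complex d Y)) \<subseteq> cbox (Complex 0 (-Y)) (Complex d Y)"
      by (rule path_image_rectpath_subset_cbox) (use d Yp in auto)
    also have "\<dots> \<subseteq> S0" using d d0 by (auto simp: S0_def in_cbox_complex_iff)
    finally show ?thesis .
  qed
  have C0: "(FF m t has_contour_integral 0) (rectpath (Complex 0 (-Y)) (Complex d Y))"
    by (rule Cauchy_theorem_convex_simple[OF hF cS0]) (use sub0 in auto)
  note sp0 = rect_split[OF C0 holomorphic_on_imp_continuous_on[OF hF] sub0, simplified]
  define S1 where "S1 = {s. 0 < Re s}"
  have cS1: "convex S1" unfolding S1_def by (rule convex_halfspace_Re_gt)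
  have hT1: "TT1 m t holomorphic_on S1"
  proof (rule TT1_holo)
    fix s assume s: "s \<in> S1"
    thus "aa m t s \<noteq> 0" using nz d0 by (auto simp: S1_def)
    show "s^2 + (of_real m)^2 \<noteq> 0"
    proof
      assume "s^2 + (of_real m)^2 = 0"
      hence "(s - \<i> * of_real m) * (s + \<i> * of_real m) = 0"
        by (simp add: algebra_simps power2_eq_square)
      thus False using s by (auto simp: S1_def add_eq_0_iff dest: arg_cong[where f=Re])
    qed
  qed
  have sub1: "path_image (rectpath (Complex d (-Y)) (Complex Y Y)) \<subseteq> S1"
  proof -
    have "path_image (rectpath (Complex d (-Y)) (Complex Y Y)) \<subseteq> cbox (Complex d (-Y)) (Complex Y Y)"
      by (rule path_image_rectpath_subset_cbox) (use d Yp Yd in auto)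
    also have "\<dots> \<subseteq> S1" using d by (auto simp: S1_def in_cbox_complex_iff)
    finally show ?thesis .
  qed
  have C1: "(TT1 m t has_contour_integral 0) (rectpath (Complex d (-Y)) (Complex Y Y))"
    by (rule Cauchy_theorem_convex_simple[OF hT1 cS1]) (use sub1 in auto)
  note sp1 = rect_split[OF C1 holomorphic_on_imp_continuous_on[OF hT1] sub1, simplified]
  define S2 where "S2 = {s. Re s < \<delta>}"
  have cS2: "convex S2" unfolding S2_def by (rule convex_halfspace_Re_lt)
  have oS2: "open S2" unfolding S2_def by (rule open_halfspace_Re_lt)
  have hq: "qq m t holomorphic_on S2" by (rule qq_holo) (use nzm in \<open>auto simp: S2_def\<close>)
  define R2 where "R2 = rectpath (Complex (-Y) (-Y)) (Complex d Y)"
  have sub2: "path_image R2 \<subseteq> cbox (Complex (-Y) (-Y)) (Complex d Y)"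
    unfolding R2_def by (rule path_image_rectpath_subset_cbox) (use d Yp Yd in auto)
  have cb2: "cbox (Complex (-Y) (-Y)) (Complex d Y) \<subseteq> S2" using d by (auto simp: S2_def in_cbox_complex_iff)
  have inb: "\<i> * of_real m \<in> box (Complex (-Y) (-Y)) (Complex d Y)"
            "- (\<i> * of_real m) \<in> box (Complex (-Y) (-Y)) (Complex d Y)"
    using d Yp Ym' m by (auto simp: in_box_complex_iff)
  have notp: "\<i> * of_real m \<notin> path_image R2" "- (\<i> * of_real m) \<notin> path_image R2"
    using inb path_image_rectpath_inter_box[of "Complex (-Y) (-Y)" "Complex d Y"] d Yp
    unfolding R2_def by auto
  have wn: "winding_number R2 (\<i> * of_real m) = 1" "winding_number R2 (- (\<i> * of_real m)) = 1"
    unfolding R2_def using inb by (auto intro!: winding_number_rectpath)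
  have int_in: "\<i> * of_real m \<in> interior S2" "- (\<i> * of_real m) \<in> interior S2"
    using d0 oS2 by (auto simp: interior_open S2_def)
  have CI1: "((\<lambda>w. qq m t w / (w - \<i> * of_real m)) has_contour_integral (2 * pi * \<i> * 1 * qq m t (\<i> * of_real m))) R2"
    using Cauchy_integral_formula_convex_simple[OF cS2 hq int_in(1), of R2] sub2 cb2 notp wn
    unfolding R2_def by auto
  have CI2: "((\<lambda>w. qq m t w / (w - - (\<i> * of_real m))) has_contour_integral (2 * pi * \<i> * 1 * qq m t (- (\<i> * of_real m)))) R2"
    using Cauchy_integral_formula_convex_simple[OF cS2 hq int_in(2), of R2] sub2 cb2 notp wn
    unfolding R2_def by auto
  have C2: "(TT2 m t has_contour_integral (2 * pi * \<i> * WW m t)) R2"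
  proof -
    have "((\<lambda>w. (qq m t w / (w - \<i> * of_real m) - qq m t w / (w - - (\<i> * of_real m))) / (2 * \<i> * of_real m))
        has_contour_integral ((2 * pi * \<i> * 1 * qq m t (\<i> * of_real m) - 2 * pi * \<i> * 1 * qq m t (- (\<i> * of_real m))) / (2 * \<i> * of_real m))) R2"
      by (intro has_contour_integral_div has_contour_integral_diff CI1 CI2)
    moreover have "(\<lambda>w. (qq m t w / (w - \<i> * of_real m) - qq m t w / (w - - (\<i> * of_real m))) / (2 * \<i> * of_real m)) = TT2 m t"
      by (simp add: TT2_def[abs_def])
    moreover have "(2 * pi * \<i> * 1 * qq m t (\<i> * of_real m) - 2 * pi * \<i> * 1 * qq m t (- (\<i> * of_real m))) / (2 * \<i> * of_real m) = 2 * pi * \<i> * WW m t"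
      by (simp add: WW_def algebra_simps diff_divide_distrib)
    ultimately show ?thesis by simp
  qed
  define S2' where "S2' = S2 - {\<i> * of_real m, - (\<i> * of_real m)}"
  have hT2: "TT2 m t holomorphic_on S2'"
    by (rule TT2_holo) (use nzm m in \<open>auto simp: S2'_def S2_def\<close>)
  have sub2': "path_image R2 \<subseteq> S2'" using sub2 cb2 notp by (auto simp: S2'_def)
  note sp2 = rect_split[OF C2[unfolded R2_def] holomorphic_on_imp_continuous_on[OF hT2] sub2'[unfolded R2_def], simplified]
  have YK': "2 * (m * exp (t * \<delta>)) \<le> Y" using YK K_def by simp
  have cF: "continuous_on S0 (FF m t)" by (rule holomorphic_on_imp_continuous_on[OF hF])
  have cT1: "continuous_on S1 (TT1 m t)" by (rule holomorphic_on_imp_continuous_on[OF hT1])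
  have cT2: "continuous_on S2' (TT2 m t)" by (rule holomorphic_on_imp_continuous_on[OF hT2])
  have noi: "\<And>z. Re z \<noteq> 0 \<Longrightarrow> z \<notin> {\<i> * of_real m, - (\<i> * of_real m)}" by auto
  have e01: "cmod (contour_integral (linepath (Complex 0 (-Y)) (Complex d (-Y))) (FF m t)) \<le> 8 / Y"
  proof (rule edge_bound2[OF cF _ Yp])
    have h: "\<And>z. z \<in> closed_segment (Complex 0 (-Y)) (Complex d (-Y)) \<Longrightarrow> cmod z \<ge> Y \<and> 0 \<le> Re z \<and> Re z \<le> d"
      using hedge[of "Complex 0 (-Y)" "-Y" "Complex d (-Y)" Y] Yp d by auto
    thus "closed_segment (Complex 0 (-Y)) (Complex d (-Y)) \<subseteq> S0" using d by (force simp: S0_def)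
    show "cmod (Complex d (-Y) - Complex 0 (-Y)) \<le> 2 * Y" using cmod_le[of "Complex d (-Y) - Complex 0 (-Y)"] d Yd by simp
    fix z assume "z \<in> closed_segment (Complex 0 (-Y)) (Complex d (-Y))"
    thus "cmod (FF m t z) \<le> 4 / Y^2" using h[of z] d by (intro FF_edge[OF m t d0 YK' Yp]) auto
  qed
  have e03: "cmod (contour_integral (linepath (Complex d Y) (Complex 0 Y)) (FF m t)) \<le> 8 / Y"
  proof (rule edge_bound2[OF cF _ Yp])
    have h: "\<And>z. z \<in> closed_segment (Complex d Y) (Complex 0 Y) \<Longrightarrow> cmod z \<ge> Y \<and> 0 \<le> Re z \<and> Re z \<le> d"
      using hedge[of "Complex d Y" "Y" "Complex 0 Y" Y] Yp d by auto
    thus "closed_segment (Complex d Y) (Complex 0 Y) \<subseteq> S0" using d by (force simp: S0_def)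
    show "cmod (Complex 0 Y - Complex d Y) \<le> 2 * Y" using cmod_le[of "Complex 0 Y - Complex d Y"] d Yd by simp
    fix z assume "z \<in> closed_segment (Complex d Y) (Complex 0 Y)"
    thus "cmod (FF m t z) \<le> 4 / Y^2" using h[of z] d by (intro FF_edge[OF m t d0 YK' Yp]) auto
  qed
  have e11: "cmod (contour_integral (linepath (Complex d (-Y)) (Complex Y (-Y))) (TT1 m t)) \<le> 8 / Y"
  proof (rule edge_bound2[OF cT1 _ Yp])
    have h: "\<And>z. z \<in> closed_segment (Complex d (-Y)) (Complex Y (-Y)) \<Longrightarrow> cmod z \<ge> Y \<and> d \<le> Re z"
      using hedge[of "Complex d (-Y)" "-Y" "Complex Y (-Y)" Y] Yp d Yd by auto
    thus "closed_segment (Complex d (-Y)) (Complex Y (-Y)) \<subseteq> S1" using d by (force simp: S1_def)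
    show "cmod (Complex Y (-Y) - Complex d (-Y)) \<le> 2 * Y" using cmod_le[of "Complex Y (-Y) - Complex d (-Y)"] d Yd by simp
    fix z assume "z \<in> closed_segment (Complex d (-Y)) (Complex Y (-Y))"
    thus "cmod (TT1 m t z) \<le> 4 / Y^2" using h[of z] d by (intro T1_edge[OF m t Ym Yp]) auto
  qed
  have e12: "cmod (contour_integral (linepath (Complex Y (-Y)) (Complex Y Y)) (TT1 m t)) \<le> 8 / Y"
  proof (rule edge_bound2[OF cT1 _ Yp])
    have h: "\<And>z. z \<in> closed_segment (Complex Y (-Y)) (Complex Y Y) \<Longrightarrow> cmod z \<ge> Y \<and> Re z = Y"
      using vedge[of "Complex Y (-Y)" "Y" "Complex Y Y" Y] Yp by auto
    thus "closed_segment (Complex Y (-Y)) (Complex Y Y) \<subseteq> S1" using Yp by (force simp: S1_def)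
    show "cmod (Complex Y Y - Complex Y (-Y)) \<le> 2 * Y" using cmod_le[of "Complex Y Y - Complex Y (-Y)"] Yp by simp
    fix z assume "z \<in> closed_segment (Complex Y (-Y)) (Complex Y Y)"
    thus "cmod (TT1 m t z) \<le> 4 / Y^2" using h[of z] Yp by (intro T1_edge[OF m t Ym Yp]) auto
  qed
  have e13: "cmod (contour_integral (linepath (Complex Y Y) (Complex d Y)) (TT1 m t)) \<le> 8 / Y"
  proof (rule edge_bound2[OF cT1 _ Yp])
    have h: "\<And>z. z \<in> closed_segment (Complex Y Y) (Complex d Y) \<Longrightarrow> cmod z \<ge> Y \<and> d \<le> Re z"
      using hedge[of "Complex Y Y" "Y" "Complex d Y" Y] Yp d Yd by auto
    thus "closed_segment (Complex Y Y) (Complex d Y) \<subseteq> S1" using d by (force simp: S1_def)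
    show "cmod (Complex d Y - Complex Y Y) \<le> 2 * Y" using cmod_le[of "Complex d Y - Complex Y Y"] d Yd by simp
    fix z assume "z \<in> closed_segment (Complex Y Y) (Complex d Y)"
    thus "cmod (TT1 m t z) \<le> 4 / Y^2" using h[of z] d by (intro T1_edge[OF m t Ym Yp]) auto
  qed
  have e21: "cmod (contour_integral (linepath (Complex (-Y) (-Y)) (Complex d (-Y))) (TT2 m t)) \<le> 8 / Y"
  proof (rule edge_bound2[OF cT2 _ Yp])
    have h: "\<And>z. z \<in> closed_segment (Complex (-Y) (-Y)) (Complex d (-Y)) \<Longrightarrow> cmod z \<ge> Y \<and> Re z \<le> d \<and> Im z = -Y"
      using hedge[of "Complex (-Y) (-Y)" "-Y" "Complex d (-Y)" Y] seg_h[of "Complex (-Y) (-Y)" "Complex d (-Y)"] Yp d by auto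
    thus "closed_segment (Complex (-Y) (-Y)) (Complex d (-Y)) \<subseteq> S2'" using d Ym' m by (force simp: S2'_def S2_def)
    show "cmod (Complex d (-Y) - Complex (-Y) (-Y)) \<le> 2 * Y" using cmod_le[of "Complex d (-Y) - Complex (-Y) (-Y)"] d Yd by simp
    fix z assume "z \<in> closed_segment (Complex (-Y) (-Y)) (Complex d (-Y))"
    thus "cmod (TT2 m t z) \<le> 4 / Y^2" using h[of z] d by (intro T2_edge[OF m t d0 YK' Yp]) auto
  qed
  have e23: "cmod (contour_integral (linepath (Complex d Y) (Complex (-Y) Y)) (TT2 m t)) \<le> 8 / Y"
  proof (rule edge_bound2[OF cT2 _ Yp])
    have h: "\<And>z. z \<in> closed_segment (Complex d Y) (Complex (-Y) Y) \<Longrightarrow> cmod z \<ge> Y \<and> Re z \<le> d \<and> Im z = Y"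
      using hedge[of "Complex d Y" "Y" "Complex (-Y) Y" Y] seg_h[of "Complex d Y" "Complex (-Y) Y"] Yp d by auto
    thus "closed_segment (Complex d Y) (Complex (-Y) Y) \<subseteq> S2'" using d Ym' m by (force simp: S2'_def S2_def)
    show "cmod (Complex (-Y) Y - Complex d Y) \<le> 2 * Y" using cmod_le[of "Complex (-Y) Y - Complex d Y"] d Yd by simp
    fix z assume "z \<in> closed_segment (Complex d Y) (Complex (-Y) Y)"
    thus "cmod (TT2 m t z) \<le> 4 / Y^2" using h[of z] d by (intro T2_edge[OF m t d0 YK' Yp]) auto
  qed
  have e24: "cmod (contour_integral (linepath (Complex (-Y) Y) (Complex (-Y) (-Y))) (TT2 m t)) \<le> 8 / Y"
  proof (rule edge_bound2[OF cT2 _ Yp])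
    have h: "\<And>z. z \<in> closed_segment (Complex (-Y) Y) (Complex (-Y) (-Y)) \<Longrightarrow> cmod z \<ge> Y \<and> Re z = -Y"
      using vedge[of "Complex (-Y) Y" "-Y" "Complex (-Y) (-Y)" Y] Yp by auto
    thus "closed_segment (Complex (-Y) Y) (Complex (-Y) (-Y)) \<subseteq> S2'" using Yp d0 by (force simp: S2'_def S2_def)
    show "cmod (Complex (-Y) (-Y) - Complex (-Y) Y) \<le> 2 * Y" using cmod_le[of "Complex (-Y) (-Y) - Complex (-Y) Y"] Yp by simp
    fix z assume "z \<in> closed_segment (Complex (-Y) Y) (Complex (-Y) (-Y))"
    thus "cmod (TT2 m t z) \<le> 4 / Y^2" using h[of z] Yp d0 by (intro T2_edge[OF m t d0 YK' Yp]) auto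
  qed
  have Vseg: "\<And>z. z \<in> closed_segment (Complex d (-Y)) (Complex d Y) \<Longrightarrow> Re z = d"
    using seg_v[of "Complex d (-Y)" "Complex d Y"] by auto
  have V: "contour_integral (linepath (Complex d (-Y)) (Complex d Y)) (FF m t)
      = contour_integral (linepath (Complex d (-Y)) (Complex d Y)) (TT1 m t)
      + contour_integral (linepath (Complex d (-Y)) (Complex d Y)) (TT2 m t)"
  proof -
    have "contour_integral (linepath (Complex d (-Y)) (Complex d Y)) (FF m t)
        = contour_integral (linepath (Complex d (-Y)) (Complex d Y)) (\<lambda>z. TT1 m t z + TT2 m t z)"
    proof (rule contour_integral_eq)
      fix z assume "z \<in> path_image (linepath (Complex d (-Y)) (Complex d Y))"
      hence Rz: "Re z = d" using Vseg by auto
      show "FF m t z = TT1 m t z + TT2 m t z"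
        by (rule FF_split[OF m]) (use Rz d nz nzm in \<open>auto dest: arg_cong[where f=Re]\<close>)
    qed
    also have "\<dots> = contour_integral (linepath (Complex d (-Y)) (Complex d Y)) (TT1 m t)
      + contour_integral (linepath (Complex d (-Y)) (Complex d Y)) (TT2 m t)"
    proof (rule contour_integral_add)
      show "TT1 m t contour_integrable_on linepath (Complex d (-Y)) (Complex d Y)"
        by (rule contour_integrable_continuous_linepath, rule continuous_on_subset[OF cT1])
           (use Vseg d in \<open>force simp: S1_def\<close>)
      show "TT2 m t contour_integrable_on linepath (Complex d (-Y)) (Complex d Y)"
        by (rule contour_integrable_continuous_linepath, rule continuous_on_subset[OF cT2])
           (use Vseg d in \<open>force simp: S2'_def S2_def dest: arg_cong[where f=Re]\<close>)
    qed
    finally show ?thesis .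
  qed
  have r0: "contour_integral (linepath (Complex 0 (-Y)) (Complex 0 Y)) (FF m t) = - contour_integral (linepath (Complex 0 Y) (Complex 0 (-Y))) (FF m t)"
    by (rule lp_rev)
  have r1: "contour_integral (linepath (Complex d Y) (Complex d (-Y))) (TT1 m t) = - contour_integral (linepath (Complex d (-Y)) (Complex d Y)) (TT1 m t)"
    by (rule lp_rev)
  define E where "E = contour_integral (linepath (Complex 0 (-Y)) (Complex d (-Y))) (FF m t)
     + contour_integral (linepath (Complex d Y) (Complex 0 Y)) (FF m t)
     + contour_integral (linepath (Complex d (-Y)) (Complex Y (-Y))) (TT1 m t)
     + contour_integral (linepath (Complex Y (-Y)) (Complex Y Y)) (TT1 m t)
     + contour_integral (linepath (Complex Y Y) (Complex d Y)) (TT1 m t)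
     - contour_integral (linepath (Complex (-Y) (-Y)) (Complex d (-Y))) (TT2 m t)
     - contour_integral (linepath (Complex d Y) (Complex (-Y) Y)) (TT2 m t)
     - contour_integral (linepath (Complex (-Y) Y) (Complex (-Y) (-Y))) (TT2 m t)"
  have eq: "contour_integral (linepath (Complex 0 (-Y)) (Complex 0 Y)) (FF m t) - 2 * pi * \<i> * WW m t = E"
  proof -
    have w: "complex_of_real (2 * pi) * \<i> * WW m t =
      contour_integral (linepath (Complex (- Y) (- Y)) (Complex d (- Y))) (TT2 m t) +
      contour_integral (linepath (Complex d (- Y)) (Complex d Y)) (TT2 m t) +
      contour_integral (linepath (Complex d Y) (Complex (- Y) Y)) (TT2 m t) +
      contour_integral (linepath (Complex (- Y) Y) (Complex (- Y) (- Y))) (TT2 m t)"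
      using sp2 by simp
    show ?thesis unfolding E_def by (rule lin_comb[OF sp0 sp1 w V r0 r1])
  qed
  have "cmod E \<le> 8/Y + 8/Y + 8/Y + 8/Y + 8/Y + 8/Y + 8/Y + 8/Y"
    unfolding E_def
    by (intro order.trans[OF norm_triangle_ineq] order.trans[OF norm_triangle_ineq4] add_mono e01 e03 e11 e12 e13 e21 e23 e24)
  thus ?thesis using eq by simp

qed

lemma WW_val:
  fixes m t :: real
  assumes m: "m > 0" and t: "t \<ge> 0" and tm: "t * m < pi / 2"
  shows "WW m t = of_real (cos (t * m) / (2 * m * (1 - sin (t * m))))"
proof -
  define \<theta> where "\<theta> = t * m"
  have th: "0 \<le> \<theta>" "\<theta> < pi / 2" using t m tm by (auto simp: \<theta>_def)
  have cpos: "cos \<theta> > 0" using th by (intro cos_gt_zero_pi) auto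
  have s1: "sin \<theta> < 1"
  proof -
    have "(sin \<theta>)^2 + (cos \<theta>)^2 = 1" by simp
    moreover have "(cos \<theta>)^2 > 0" using cpos by simp
    ultimately have "(sin \<theta>)^2 < 1" by linarith
    thus ?thesis by (smt (verit) one_le_power)
  qed
  define c where "c = cos \<theta>"
  define s where "s = sin \<theta>"
  define z where "z = exp (\<i> * of_real \<theta>)"
  define z' where "z' = exp (- (\<i> * of_real \<theta>))"
  have zz: "z * z' = 1" unfolding z_def z'_def by (simp add: exp_minus_inverse)
  have zc: "z = of_real c + \<i> * of_real s"
    unfolding z_def c_def s_def by (simp add: complex_eq_iff Re_exp Im_exp)
  have zc': "z' = of_real c - \<i> * of_real s"
    unfolding z'_def c_def s_def by (simp add: complex_eq_iff Re_exp Im_exp)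
  have zi: "z - \<i> \<noteq> 0"
  proof
    assume "z - \<i> = 0"
    hence "Im z = 1" by (simp add: complex_eq_iff)
    thus False using zc s1 s_def by simp
  qed
  have zi': "z' + \<i> \<noteq> 0"
  proof
    assume "z' + \<i> = 0"
    hence "Im z' = -1" by (simp add: complex_eq_iff)
    thus False using zc' s1 s_def by simp
  qed
  have mnz: "(of_real m :: complex) \<noteq> 0" using m by simp
  have e1: "of_real t * (\<i> * of_real m) = \<i> * of_real \<theta>" by (simp add: \<theta>_def)
  have e2: "- (of_real t * - (\<i> * of_real m)) = \<i> * of_real \<theta>" by (simp add: \<theta>_def)
  have e3: "of_real t * - (\<i> * of_real m) = - (\<i> * of_real \<theta>)" by (simp add: \<theta>_def)
  have e4: "- (of_real t * (\<i> * of_real m)) = - (\<i> * of_real \<theta>)" by (simp add: \<theta>_def)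
  have q1: "qq m t (\<i> * of_real m) = z / (z - \<i>)"
  proof -
    have "qq m t (\<i> * of_real m) = of_real m * z / (- (\<i> * of_real m) + of_real m * z)"
      unfolding qq_def aa_def e1 e2 z_def by simp
    also have "\<dots> = (of_real m * z) / (of_real m * (z - \<i>))" by (simp add: algebra_simps)
    also have "\<dots> = z / (z - \<i>)" using mnz by simp
    finally show ?thesis .
  qed
  have q2: "qq m t (- (\<i> * of_real m)) = z' / (z' + \<i>)"
  proof -
    have "qq m t (- (\<i> * of_real m)) = of_real m * z' / (\<i> * of_real m + of_real m * z')"
    proof -
      have e5: "exp (- (complex_of_real t * (\<i> * complex_of_real m))) = z'"
        unfolding z'_def using arg_cong[where f=exp, OF e4] .
      show ?thesis
        unfolding qq_def aa_def arg_cong[where f=exp, OF e3] z'_def[symmetric] using e5 by simp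
    qed
    also have "\<dots> = (of_real m * z') / (of_real m * (z' + \<i>))" by (simp add: algebra_simps)
    also have "\<dots> = z' / (z' + \<i>)" using mnz by simp
    finally show ?thesis .
  qed
  have X: "z / (z - \<i>) - z' / (z' + \<i>) = (z * (z' + \<i>) - z' * (z - \<i>)) / ((z - \<i>) * (z' + \<i>))"
    using zi zi' by (simp add: field_simps)
  have num: "z * (z' + \<i>) - z' * (z - \<i>) = 2 * \<i> * of_real c"
    unfolding zc zc' by (simp add: algebra_simps)
  have den: "(z - \<i>) * (z' + \<i>) = 2 * (1 - of_real s)"
  proof -
    have "(z - \<i>) * (z' + \<i>) = z * z' + \<i> * (z - z') + 1" by (simp add: algebra_simps)
    also have "\<dots> = 2 * (1 - of_real s)" unfolding zz by (simp add: zc zc' algebra_simps)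
    finally show ?thesis .
  qed
  have s1': "(1 - of_real s :: complex) \<noteq> 0" using s1 s_def
    by (metis less_irrefl of_real_1 of_real_eq_iff right_minus_eq)
  have "WW m t = (2 * \<i> * of_real c) / (2 * (1 - of_real s)) / (2 * \<i> * of_real m)"
    unfolding WW_def q1 q2 X num den ..
  also have "\<dots> = of_real c / (2 * of_real m * (1 - of_real s))"
    using s1' mnz by (simp add: field_simps)
  also have "\<dots> = of_real (cos (t * m) / (2 * m * (1 - sin (t * m))))"
    by (simp add: c_def s_def \<theta>_def)
  finally show ?thesis .
qed

lemma FF_axis:
  "FF m t (Complex 0 y) = of_real (1 / (cmod (aa m t (\<i> * of_real y)))^2)"
proof -
  define A where "A = aa m t (\<i> * of_real y)"
  have c: "Complex 0 y = \<i> * of_real y" by (simp add: complex_eq_iff)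
  have "aa m t (- (\<i> * of_real y)) = cnj A"
    unfolding A_def aa_def by (simp add: exp_cnj)
  hence "FF m t (Complex 0 y) = 1 / (A * cnj A)" unfolding FF_def c A_def by simp
  also have "\<dots> = 1 / of_real ((cmod A)^2)" by (simp only: complex_norm_square)
  finally show ?thesis unfolding A_def by simp
qed

theorem scalar_integral:
  fixes m t :: real
  assumes m: "m > 0" and t: "t \<ge> 0" and tm: "t * m < pi / 2"
  shows "((\<lambda>y. 1 / (cmod (aa m t (\<i> * of_real y)))^2) has_integral
           pi * cos (t * m) / (m * (1 - sin (t * m)))) UNIV"
proof -
  define \<phi> where "\<phi> = (\<lambda>y::real. 1 / (cmod (aa m t (\<i> * of_real y)))^2)"
  define L where "L = pi * cos (t * m) / (m * (1 - sin (t * m)))"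
  obtain \<delta> where d0: "\<delta> > 0" and d1: "t * m * exp (t * \<delta>) < pi / 2"
      and d2: "\<delta> < m * cos (t * m * exp (t * \<delta>))"
    using delta_exists[OF m t tm] by blast
  have nz: "\<And>u. Re u \<ge> - \<delta> \<Longrightarrow> aa m t u \<noteq> 0"
    using aa_nz[OF m t d1 d2 d0] by blast
  have cont: "continuous_on UNIV \<phi>"
  proof -
    have "continuous_on UNIV (\<lambda>y::real. aa m t (\<i> * of_real y))"
      unfolding aa_def by (intro continuous_intros)
    moreover have "\<And>y. aa m t (\<i> * of_real y) \<noteq> 0" using nz d0 by simp
    ultimately show ?thesis unfolding \<phi>_def by (intro continuous_intros) auto
  qed
  have nonneg: "\<And>y. \<phi> y \<ge> 0" unfolding \<phi>_def by simp
  define J where "J = (\<lambda>Y::real. integral {-Y..Y} \<phi>)"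
  have hasJ: "\<And>Y. (\<phi> has_integral J Y) {-Y..Y}"
    unfolding J_def by (rule integrable_integral, rule integrable_continuous_real, rule continuous_on_subset[OF cont]) auto
  define Y0 where "Y0 = 2 * (m * exp (t * \<delta>)) + \<delta> + m + 1"
  have Y0: "Y0 > 0" unfolding Y0_def using m d0 by (smt (verit) exp_gt_zero mult_pos_pos)
  have WWv: "2 * pi * \<i> * WW m t = \<i> * of_real L"
  proof -
    have th: "0 \<le> t * m" using t m by simp
    have cpos: "cos (t * m) > 0" using th tm by (intro cos_gt_zero_pi) auto
    have "(sin (t * m))^2 + (cos (t * m))^2 = 1" by simp
    moreover have "(cos (t * m))^2 > 0" using cpos by simp
    ultimately have "(sin (t * m))^2 < 1" by linarith
    hence "sin (t * m) < 1" by (smt (verit) one_le_power)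
    hence r: "2 * pi * (cos (t * m) / (2 * m * (1 - sin (t * m)))) = L"
      unfolding L_def using m by (simp add: field_simps)
    have "2 * pi * \<i> * WW m t = \<i> * of_real (2 * pi * (cos (t * m) / (2 * m * (1 - sin (t * m)))))"
      unfolding WW_val[OF m t tm] by simp
    thus ?thesis unfolding r .
  qed
  have est: "\<And>Y. Y \<ge> Y0 \<Longrightarrow> \<bar>J Y - L\<bar> \<le> 64 / Y"
  proof -
    fix Y assume Y: "Y \<ge> Y0"
    have Yp: "Y > 0" using Y Y0 by linarith
    have "(FF m t has_contour_integral (\<i> * of_real (J Y))) (linepath (Complex 0 (-Y)) (Complex 0 Y))"
      by (rule axis_integral[OF hasJ Yp]) (simp add: FF_axis \<phi>_def)
    hence ci: "contour_integral (linepath (Complex 0 (-Y)) (Complex 0 Y)) (FF m t) = \<i> * of_real (J Y)"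
      by (rule contour_integral_unique)
    have "cmod (contour_integral (linepath (Complex 0 (-Y)) (Complex 0 Y)) (FF m t) - 2 * pi * \<i> * WW m t) \<le> 64 / Y"
      by (rule axis_estimate[OF m t d0 nz]) (use Y Y0_def in auto)
    also have "contour_integral (linepath (Complex 0 (-Y)) (Complex 0 Y)) (FF m t) - 2 * pi * \<i> * WW m t
        = \<i> * of_real (J Y - L)" unfolding ci WWv by (simp add: algebra_simps)
    finally have "cmod (\<i> * of_real (J Y - L)) \<le> 64 / Y" .
    thus "\<bar>J Y - L\<bar> \<le> 64 / Y" by (simp only: norm_mult norm_ii norm_of_real) simp
  qed
  have lim: "(\<lambda>k::nat. J (real k)) \<longlonglongrightarrow> L"
  proof -
    have "(\<lambda>k::nat. J (real k) - L) \<longlonglongrightarrow> 0"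
    proof (rule Lim_null_comparison)
      show "\<forall>\<^sub>F k in sequentially. norm (J (real k) - L) \<le> 64 * (1 / real k)"
      proof -
        obtain N :: nat where N: "real N \<ge> Y0" using real_arch_simple by blast
        show ?thesis unfolding eventually_sequentially
          by (rule exI[of _ N]) (use est N in auto)
      qed
      show "(\<lambda>k. 64 * (1 / real k)) \<longlonglongrightarrow> 0"
        using tendsto_mult_right_zero[OF lim_inverse_n', of 64] by simp
    qed
    thus ?thesis by (simp add: LIM_zero_iff)
  qed
  define f where "f = (\<lambda>(k::nat) x. if x \<in> {- real k..real k} then \<phi> x else 0)"
  have fi: "\<And>k. (f k has_integral J (real k)) UNIV"
    unfolding f_def using hasJ by (simp only: has_integral_restrict_UNIV)
  have fmono: "\<And>k x. f k x \<le> f (Suc k) x"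
    unfolding f_def using nonneg by auto
  have flim: "\<And>x. (\<lambda>k. f k x) \<longlonglongrightarrow> \<phi> x"
  proof -
    fix x :: real
    obtain N :: nat where N: "real N \<ge> \<bar>x\<bar>" using real_arch_simple by blast
    have "\<forall>\<^sub>F k in sequentially. f k x = \<phi> x"
      unfolding eventually_sequentially f_def by (rule exI[of _ N]) (use N in auto)
    thus "(\<lambda>k. f k x) \<longlonglongrightarrow> \<phi> x" by (rule tendsto_eventually)
  qed
  have "(\<phi> has_integral L) UNIV"
    by (rule has_integral_monotone_convergence_increasing[OF fi _ _ lim]) (use fmono flim in auto)
  thus ?thesis unfolding \<phi>_def L_def .
qed

lemma sym_inner:
  fixes A :: "real^'n^'n"
  assumes "transpose A = A"
  shows "x \<bullet> (A *v y) = (A *v x) \<bullet> y"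
proof -
  have "x \<bullet> (A *v y) = (x v* A) \<bullet> y" by (simp add: dot_lmul_matrix)
  also have "x v* A = transpose A *v x" by simp
  finally show ?thesis using assms by simp
qed

lemma rayleigh:
  fixes A :: "real^'n^'n" and S :: "(real^'n) set"
  assumes sym: "transpose A = A" and cl: "closed S"
    and sc: "\<And>x r. x \<in> S \<Longrightarrow> r *\<^sub>R x \<in> S"
    and df: "\<And>x y. x \<in> S \<Longrightarrow> y \<in> S \<Longrightarrow> x - y \<in> S"
    and inv: "\<And>x. x \<in> S \<Longrightarrow> A *v x \<in> S"
    and x0: "x0 \<in> S" "x0 \<noteq> 0"
  shows "\<exists>v\<in>S. norm v = 1 \<and> A *v v = (v \<bullet> (A *v v)) *\<^sub>R v"
proof -
  define T where "T = sphere 0 1 \<inter> S"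
  have cT: "compact T" unfolding T_def by (rule compact_Int_closed[OF compact_sphere cl])
  have "(1 / norm x0) *\<^sub>R x0 \<in> T" using x0 sc by (auto simp: T_def)
  hence neT: "T \<noteq> {}" by blast
  define f where "f = (\<lambda>x::real^'n. x \<bullet> (A *v x))"
  have cf: "continuous_on T f" unfolding f_def by (intro continuous_intros)
  obtain v where vT: "v \<in> T" and vmax: "\<And>y. y \<in> T \<Longrightarrow> f y \<le> f v"
    using continuous_attains_sup[OF cT neT cf] by blast
  define l where "l = f v"
  have vS: "v \<in> S" and nv: "norm v = 1" using vT by (auto simp: T_def)
  have vv: "v \<bullet> v = 1" using nv by (simp add: dot_square_norm)
  define Q where "Q = (\<lambda>x. l * (x \<bullet> x) - x \<bullet> (A *v x))"
  have Qnn: "\<And>x. x \<in> S \<Longrightarrow> Q x \<ge> 0"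
  proof -
    fix x assume xS: "x \<in> S"
    show "Q x \<ge> 0"
    proof (cases "x = 0")
      case True thus ?thesis by (simp add: Q_def)
    next
      case False
      define y where "y = (1 / norm x) *\<^sub>R x"
      have "y \<in> T" using False xS sc by (auto simp: T_def y_def)
      hence "f y \<le> l" using vmax l_def by blast
      moreover have "f y = f x / (norm x)^2"
        unfolding f_def y_def by (simp add: matrix_vector_mult_scaleR power2_eq_square)
      ultimately have "f x / (norm x)^2 \<le> l" by simp
      hence "f x \<le> l * (norm x)^2" using False by (simp add: divide_le_eq)
      thus ?thesis unfolding Q_def f_def by (simp add: dot_square_norm)
    qed
  qed
  define w where "w = A *v v - l *\<^sub>R v"
  have wS: "w \<in> S" unfolding w_def using inv vS sc df by blast
  have sy: "\<And>x y. x \<bullet> (A *v y) = (A *v x) \<bullet> y" by (rule sym_inner[OF sym])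
  have wAv: "w \<bullet> w = w \<bullet> (A *v v) - l * (w \<bullet> v)" unfolding w_def
    by (simp add: inner_diff_left inner_diff_right algebra_simps)
  have key: "\<And>r. Q (v - r *\<^sub>R w) = 2 * r * (w \<bullet> w) + r^2 * Q w"
  proof -
    fix r :: real
    have e1: "v \<bullet> (A *v w) = w \<bullet> (A *v v)" using sy[of v w] by (simp add: inner_commute)
    have e2: "v \<bullet> (A *v v) = l" by (simp add: l_def f_def)
    show "Q (v - r *\<^sub>R w) = 2 * r * (w \<bullet> w) + r^2 * Q w"
    proof -
      have vw: "v \<bullet> w = w \<bullet> v" by (rule inner_commute)
      have wAv': "w \<bullet> (A *v v) = w \<bullet> w + l * (w \<bullet> v)" using wAv by simp
      show ?thesis unfolding Q_def
        by (simp add: wAv' inner_diff_left inner_diff_right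
          matrix_vector_mult_scaleR e1 e2 vv algebra_simps vw power2_eq_square)
    qed
  qed
  have "w \<bullet> w = 0"
  proof (rule ccontr)
    assume ne: "w \<bullet> w \<noteq> 0"
    hence pos: "w \<bullet> w > 0" by (simp add: order_le_neq_trans[OF inner_ge_zero] ne)
    have Qw: "Q w \<ge> 0" using Qnn wS by blast
    define t where "t = (w \<bullet> w) / (Q w + 1)"
    have tp: "t > 0" unfolding t_def using pos Qw by simp
    have "t * Q w = (w \<bullet> w) * (Q w / (Q w + 1))" unfolding t_def by simp
    also have "\<dots> < (w \<bullet> w) * 1" using pos Qw by (intro mult_strict_left_mono) auto
    finally have tq: "t * Q w < w \<bullet> w" by simp
    have "v - (- t) *\<^sub>R w \<in> S" using vS wS sc df by blast
    hence "Q (v - (- t) *\<^sub>R w) \<ge> 0" by (rule Qnn)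
    hence "2 * (- t) * (w \<bullet> w) + (- t)^2 * Q w \<ge> 0" unfolding key .
    moreover have "2 * (- t) * (w \<bullet> w) + (- t)^2 * Q w = t * (t * Q w - 2 * (w \<bullet> w))"
      by (simp add: algebra_simps power2_eq_square)
    moreover have "t * (t * Q w - 2 * (w \<bullet> w)) < 0" using tp tq pos by (intro mult_pos_neg; linarith)
    ultimately show False by linarith
  qed
  hence "w = 0" by simp
  hence "A *v v = l *\<^sub>R v" unfolding w_def by simp
  thus ?thesis using vS nv by (auto simp: l_def f_def)
qed

lemma ortho_eigen_exists:
  fixes A :: "real^'n^'n"
  assumes sym: "transpose A = A"
  shows "k \<le> CARD('n) \<Longrightarrow> \<exists>F. finite F \<and> card F = k \<and>
           (\<forall>f\<in>F. norm f = 1 \<and> A *v f = (f \<bullet> (A *v f)) *\<^sub>R f) \<and>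
           (\<forall>f\<in>F. \<forall>g\<in>F. f \<noteq> g \<longrightarrow> f \<bullet> g = 0)"
proof (induction k)
  case 0
  show ?case by (rule exI[of _ "{}"]) auto
next
  case (Suc k)
  then obtain F where fF: "finite F" and cF: "card F = k"
    and eF: "\<forall>f\<in>F. norm f = 1 \<and> A *v f = (f \<bullet> (A *v f)) *\<^sub>R f"
    and oF: "\<forall>f\<in>F. \<forall>g\<in>F. f \<noteq> g \<longrightarrow> f \<bullet> g = 0" by auto
  have kl: "k < CARD('n)" using Suc.prems by simp
  define S where "S = {x. \<forall>f\<in>F. f \<bullet> x = 0}"
  have clS: "closed S"
  proof -
    have "S = (\<Inter>f\<in>F. {x. f \<bullet> x = 0})" by (auto simp: S_def)
    thus ?thesis by (auto intro!: closed_INT closed_hyperplane)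
  qed
  have scS: "\<And>x r. x \<in> S \<Longrightarrow> r *\<^sub>R x \<in> S" by (auto simp: S_def)
  have dfS: "\<And>x y. x \<in> S \<Longrightarrow> y \<in> S \<Longrightarrow> x - y \<in> S" by (auto simp: S_def inner_diff_right)
  have invS: "\<And>x. x \<in> S \<Longrightarrow> A *v x \<in> S"
  proof -
    fix x assume xS: "x \<in> S"
    { fix f assume fF': "f \<in> F"
      have "f \<bullet> (A *v x) = (A *v f) \<bullet> x" by (rule sym_inner[OF sym])
      also have "\<dots> = (f \<bullet> (A *v f)) * (f \<bullet> x)" using eF fF' by (metis inner_scaleR_left)
      also have "\<dots> = 0" using xS fF' by (simp add: S_def)
      finally have "f \<bullet> (A *v x) = 0" . }
    thus "A *v x \<in> S" by (simp add: S_def)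
  qed
  have "dim F \<le> card F" using fF by (intro dim_le_card) (auto intro: span_base)
  hence "dim F < DIM(real^'n)" using cF kl by simp
  then obtain x0 where x0: "x0 \<noteq> 0" "\<And>y. y \<in> span F \<Longrightarrow> orthogonal x0 y"
    by (rule orthogonal_to_subspace_exists) blast
  have x0S: "x0 \<in> S" using x0(2) by (auto simp: S_def orthogonal_def inner_commute intro: span_base)
  obtain v where vS: "v \<in> S" and nv: "norm v = 1" and ev: "A *v v = (v \<bullet> (A *v v)) *\<^sub>R v"
    using rayleigh[OF sym clS scS dfS invS x0S x0(1)] by blast
  have vF: "v \<notin> F"
  proof
    assume "v \<in> F"
    hence "v \<bullet> v = 0" using vS by (simp add: S_def)
    thus False using nv by simp
  qed
  show ?case
  proof (rule exI[of _ "insert v F"], intro conjI)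
    show "finite (insert v F)" using fF by simp
    show "card (insert v F) = Suc k" using fF vF cF by simp
    show "\<forall>f\<in>insert v F. norm f = 1 \<and> A *v f = (f \<bullet> (A *v f)) *\<^sub>R f" using eF nv ev by auto
    show "\<forall>f\<in>insert v F. \<forall>g\<in>insert v F. f \<noteq> g \<longrightarrow> f \<bullet> g = 0"
      using oF vS by (auto simp: S_def inner_commute)
  qed
qed

theorem spectral:
  fixes A :: "real^'n^'n"
  assumes sym: "transpose A = A"
  obtains u :: "'n \<Rightarrow> real^'n" and \<mu> :: "'n \<Rightarrow> real"
  where "\<And>i j. u i \<bullet> u j = (if i = j then 1 else 0)" "\<And>i. A *v u i = \<mu> i *\<^sub>R u i"
proof -
  obtain F where fF: "finite F" and cF: "card F = CARD('n)"
    and eF: "\<forall>f\<in>F. norm f = 1 \<and> A *v f = (f \<bullet> (A *v f)) *\<^sub>R f"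
    and oF: "\<forall>f\<in>F. \<forall>g\<in>F. f \<noteq> g \<longrightarrow> f \<bullet> g = 0"
    using ortho_eigen_exists[OF sym, of "CARD('n)"] by auto
  obtain h where h: "bij_betw h (UNIV :: 'n set) F"
    using finite_same_card_bij[of "UNIV :: 'n set" F] fF cF by auto
  have hF: "\<And>i. h i \<in> F" using h by (auto simp: bij_betw_def)
  have hinj: "\<And>i j. h i = h j \<Longrightarrow> i = j" using h by (auto simp: bij_betw_def inj_def)
  show ?thesis
  proof (rule that[of h "\<lambda>i. h i \<bullet> (A *v h i)"])
    fix i j
    show "h i \<bullet> h j = (if i = j then 1 else 0)"
    proof (cases "i = j")
      case True
      have "norm (h i) = 1" using eF hF by auto
      thus ?thesis using True norm_eq_1 by auto
    next
      case False
      hence "h i \<noteq> h j" using hinj by blast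
      thus ?thesis using oF hF False by auto
    qed
  next
    fix i show "A *v h i = (h i \<bullet> (A *v h i)) *\<^sub>R h i" using eF hF by auto
  qed
qed

definition osp :: "('n::finite \<Rightarrow> real^'n) \<Rightarrow> ('n \<Rightarrow> 'a::real_field) \<Rightarrow> 'a^'n^'n" where
  "osp u g = (\<chi> r c. \<Sum>k\<in>UNIV. g k * of_real (u k $ r * u k $ c))"

definition orthonormal :: "('n::finite \<Rightarrow> real^'n) \<Rightarrow> bool" where
  "orthonormal u \<longleftrightarrow> (\<forall>i j. u i \<bullet> u j = (if i = j then 1 else 0))"

lemma on_inner: "orthonormal u \<Longrightarrow> (\<Sum>r\<in>UNIV. u i $ r * u j $ r) = (if i = j then 1 else 0)"
  unfolding orthonormal_def by (metis inner_vec_def inner_real_def)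

lemma on_complete:
  fixes u :: "'n::finite \<Rightarrow> real^'n"
  assumes on: "orthonormal u"
  shows "(\<Sum>k\<in>UNIV. u k $ r * u k $ s) = (if r = s then 1 else 0)"
proof -
  define U :: "real^'n^'n" where "U = (\<chi> r k. u k $ r)"
  have "transpose U ** U = mat 1"
    unfolding U_def by (simp add: matrix_matrix_mult_def transpose_def mat_def vec_eq_iff on_inner[OF on])
  hence "U ** transpose U = mat 1" by (simp add: matrix_left_right_inverse)
  hence "(U ** transpose U) $ r $ s = mat 1 $ r $ s" by simp
  thus ?thesis unfolding U_def by (simp add: matrix_matrix_mult_def transpose_def mat_def)
qed

lemma osp_mult:
  fixes u :: "'n::finite \<Rightarrow> real^'n" and g h :: "'n \<Rightarrow> 'a::real_field"
  assumes on: "orthonormal u"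
  shows "osp u g ** osp u h = osp u (\<lambda>k. g k * h k)"
proof -
  have "(\<Sum>j\<in>UNIV. (\<Sum>k\<in>UNIV. g k * of_real (u k $ r * u k $ j)) * (\<Sum>l\<in>UNIV. h l * of_real (u l $ j * u l $ c)))
      = (\<Sum>k\<in>UNIV. g k * h k * of_real (u k $ r * u k $ c))" for r c
  proof -
    have "(\<Sum>j\<in>UNIV. (\<Sum>k\<in>UNIV. g k * of_real (u k $ r * u k $ j)) * (\<Sum>l\<in>UNIV. h l * of_real (u l $ j * u l $ c)))
        = (\<Sum>j\<in>UNIV. \<Sum>k\<in>UNIV. \<Sum>l\<in>UNIV. (g k * of_real (u k $ r * u k $ j)) * (h l * of_real (u l $ j * u l $ c)))"
      by (simp only: sum_product)
    also have "\<dots> = (\<Sum>k\<in>UNIV. \<Sum>l\<in>UNIV. \<Sum>j\<in>UNIV. (g k * of_real (u k $ r * u k $ j)) * (h l * of_real (u l $ j * u l $ c)))"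
      by (subst sum.swap, rule sum.cong, simp, subst sum.swap, simp)
    also have "\<dots> = (\<Sum>k\<in>UNIV. \<Sum>l\<in>UNIV. (g k * h l * of_real (u k $ r * u l $ c)) * of_real (\<Sum>j\<in>UNIV. u k $ j * u l $ j))"
      by (simp add: of_real_sum sum_distrib_left mult_ac)
    also have "\<dots> = (\<Sum>k\<in>UNIV. g k * h k * of_real (u k $ r * u k $ c))"
      by (simp add: on_inner[OF on] if_distrib sum.delta cong: if_cong)
    finally show ?thesis .
  qed
  thus ?thesis unfolding osp_def matrix_matrix_mult_def by (simp add: vec_eq_iff)
qed

lemma osp_one:
  fixes u :: "'n::finite \<Rightarrow> real^'n"
  assumes on: "orthonormal u"
  shows "osp u (\<lambda>_. 1 :: 'a::real_field) = mat 1"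
proof -
  have "(\<Sum>k\<in>UNIV. (1::'a) * of_real (u k $ r * u k $ c)) = (if r = c then 1 else 0)" for r c
  proof -
    have "(\<Sum>k\<in>UNIV. (1::'a) * of_real (u k $ r * u k $ c)) = of_real (\<Sum>k\<in>UNIV. u k $ r * u k $ c)"
      by (simp only: of_real_sum mult_1)
    thus ?thesis by (simp add: on_complete[OF on])
  qed
  thus ?thesis unfolding osp_def mat_def by (simp add: vec_eq_iff)
qed

lemma osp_transpose:
  fixes u :: "'n::finite \<Rightarrow> real^'n"
  shows "transpose (osp u g) = osp u g"
  unfolding osp_def transpose_def by (simp add: vec_eq_iff mult.commute)

lemma osp_diff:
  fixes u :: "'n::finite \<Rightarrow> real^'n"
  shows "osp u g - osp u h = osp u (\<lambda>k. g k - h k)"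
  unfolding osp_def by (simp add: vec_eq_iff sum_subtractf[symmetric] algebra_simps)

lemma osp_add:
  fixes u :: "'n::finite \<Rightarrow> real^'n"
  shows "osp u g + osp u h = osp u (\<lambda>k. g k + h k)"
  unfolding osp_def by (simp add: vec_eq_iff sum.distrib[symmetric] algebra_simps)

lemma osp_scaleR:
  fixes u :: "'n::finite \<Rightarrow> real^'n" and g :: "'n \<Rightarrow> real"
  shows "c *\<^sub>R osp u g = osp u (\<lambda>k. c * g k)"
  unfolding osp_def by (simp add: vec_eq_iff sum_distrib_left algebra_simps)

lemma osp_mvec:
  fixes u :: "'n::finite \<Rightarrow> real^'n" and g :: "'n \<Rightarrow> real"
  assumes on: "orthonormal u"
  shows "osp u g *v u l = g l *\<^sub>R u l"
proof -
  have "(\<Sum>c\<in>UNIV. (\<Sum>k\<in>UNIV. g k * (u k $ r * u k $ c)) * u l $ c) = g l * u l $ r" for r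
  proof -
    have "(\<Sum>c\<in>UNIV. (\<Sum>k\<in>UNIV. g k * (u k $ r * u k $ c)) * u l $ c)
        = (\<Sum>k\<in>UNIV. g k * u k $ r * (\<Sum>c\<in>UNIV. u k $ c * u l $ c))"
      by (simp add: sum_distrib_left sum_distrib_right mult_ac) (rule sum.swap)
    also have "\<dots> = g l * u l $ r" by (simp add: on_inner[OF on] if_distrib sum.delta cong: if_cong)
    finally show ?thesis .
  qed
  thus ?thesis unfolding osp_def matrix_vector_mult_def by (simp add: vec_eq_iff)
qed

lemma mat_expand:
  fixes u :: "'n::finite \<Rightarrow> real^'n" and X :: "real^'n^'n"
  assumes on: "orthonormal u"
  shows "X $ r $ c = (\<Sum>k\<in>UNIV. (X *v u k) $ r * u k $ c)"
proof -
  have "(\<Sum>k\<in>UNIV. (X *v u k) $ r * u k $ c) = (\<Sum>k\<in>UNIV. \<Sum>j\<in>UNIV. X $ r $ j * (u k $ j * u k $ c))"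
    by (simp add: matrix_vector_mult_def sum_distrib_right mult.assoc)
  also have "\<dots> = (\<Sum>j\<in>UNIV. X $ r $ j * (\<Sum>k\<in>UNIV. u k $ j * u k $ c))"
    by (subst sum.swap) (simp add: sum_distrib_left)
  also have "\<dots> = X $ r $ c" by (simp add: on_complete[OF on] if_distrib sum.delta cong: if_cong)
  finally show ?thesis by simp
qed

lemma eig_ext:
  fixes u :: "'n::finite \<Rightarrow> real^'n" and X Y :: "real^'n^'n"
  assumes on: "orthonormal u" and eq: "\<And>k. X *v u k = Y *v u k"
  shows "X = Y"
  by (simp add: vec_eq_iff mat_expand[OF on, of X] mat_expand[OF on, of Y] eq)

lemma osp_eig:
  fixes u :: "'n::finite \<Rightarrow> real^'n" and X :: "real^'n^'n"
  assumes on: "orthonormal u" and eq: "\<And>k. X *v u k = g k *\<^sub>R u k"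
  shows "X = osp u g"
  by (rule eig_ext[OF on]) (simp add: eq osp_mvec[OF on])

lemma osp_mpow:
  fixes u :: "'n::finite \<Rightarrow> real^'n"
  assumes on: "orthonormal u"
  shows "mpow (osp u g) n = osp u (\<lambda>k. g k ^ n)"
proof (induction n)
  case 0
  show ?case by (simp add: mpow_def osp_one[OF on])
next
  case (Suc n)
  have "mpow (osp u g) (Suc n) = osp u g ** mpow (osp u g) n" by (simp add: mpow_def)
  also have "\<dots> = osp u (\<lambda>k. g k ^ Suc n)" unfolding Suc osp_mult[OF on] by simp
  finally show ?case .
qed

lemma minv_unique:
  fixes A B :: "'a::comm_ring_1^'n::finite^'n"
  assumes "A ** B = mat 1" "B ** A = mat 1"
  shows "matrix_inv A = B"
proof -
  have ex: "\<exists>B'. A ** B' = mat 1 \<and> B' ** A = mat 1" using assms by blast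
  define C where "C = matrix_inv A"
  have C: "A ** C = mat 1 \<and> C ** A = mat 1" unfolding C_def matrix_inv_def by (rule someI_ex[OF ex])
  have "C = C ** (A ** B)" using assms by (simp add: matrix_mul_rid)
  also have "\<dots> = (C ** A) ** B" by (simp add: matrix_mul_assoc)
  also have "\<dots> = B" using C by (simp add: matrix_mul_lid)
  finally show ?thesis unfolding C_def .
qed

lemma osp_inv:
  fixes u :: "'n::finite \<Rightarrow> real^'n" and g :: "'n \<Rightarrow> 'a::real_field"
  assumes on: "orthonormal u" and nz: "\<And>k. g k \<noteq> 0"
  shows "matrix_inv (osp u g) = osp u (\<lambda>k. inverse (g k))"
  by (rule minv_unique) (simp_all add: osp_mult[OF on] nz osp_one[OF on])

lemma cmat_osp:
  fixes u :: "'n::finite \<Rightarrow> real^'n" and g :: "'n \<Rightarrow> real"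
  shows "cmat (osp u g) = osp u (\<lambda>k. complex_of_real (g k))"
  unfolding cmat_def osp_def by (simp add: vec_eq_iff)

lemma cmat_mult:
  fixes A :: "real^'m::finite^'n::finite" and B :: "real^'k::finite^'m"
  shows "cmat (A ** B) = cmat A ** cmat B"
  unfolding cmat_def matrix_matrix_mult_def by (simp add: vec_eq_iff)

lemma cmat_diff:
  fixes A B :: "real^'m::finite^'n::finite"
  shows "cmat (A - B) = cmat A - cmat B"
  unfolding cmat_def by (simp add: vec_eq_iff)

definition oproj :: "('n::finite \<Rightarrow> real^'n) \<Rightarrow> 'n \<Rightarrow> real^'n^'n" where
  "oproj u k = (\<chi> r c. u k $ r * u k $ c)"

lemma osp_sum:
  fixes u :: "'n::finite \<Rightarrow> real^'n" and g :: "'n \<Rightarrow> real"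
  shows "osp u g = (\<Sum>k\<in>UNIV. g k *\<^sub>R oproj u k)"
  unfolding osp_def oproj_def by (simp add: vec_eq_iff sum_component)

lemma osp_series:
  fixes u :: "'n::finite \<Rightarrow> real^'n" and g :: "'n \<Rightarrow> real"
  assumes on: "orthonormal u" and s: "\<And>x. (\<lambda>n. c n * x ^ (p n)) sums f x"
  shows "(\<lambda>n. c n *\<^sub>R mpow (osp u g) (p n)) sums osp u (\<lambda>k. f (g k))"
proof -
  have "(\<lambda>n. \<Sum>k\<in>UNIV. (c n * g k ^ p n) *\<^sub>R oproj u k) sums (\<Sum>k\<in>UNIV. f (g k) *\<^sub>R oproj u k)"
    by (intro sums_sum sums_scaleR_left s)
  moreover have "\<And>n. c n *\<^sub>R mpow (osp u g) (p n) = (\<Sum>k\<in>UNIV. (c n * g k ^ p n) *\<^sub>R oproj u k)"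
    by (simp only: osp_mpow[OF on] osp_scaleR) (simp add: osp_sum)
  ultimately show ?thesis by (simp add: osp_sum)
qed

lemma osp_cos:
  fixes u :: "'n::finite \<Rightarrow> real^'n" and g :: "'n \<Rightarrow> real"
  assumes on: "orthonormal u"
  shows "mat_cos (osp u g) = osp u (\<lambda>k. cos (g k))"
  unfolding mat_cos_def
  by (rule sums_unique[symmetric], rule osp_series[OF on, of "\<lambda>n. (-1)^n / fact (2*n)" "\<lambda>n. 2*n" cos])
     (rule cos_paired)

lemma osp_sin:
  fixes u :: "'n::finite \<Rightarrow> real^'n" and g :: "'n \<Rightarrow> real"
  assumes on: "orthonormal u"
  shows "mat_sin (osp u g) = osp u (\<lambda>k. sin (g k))"
  unfolding mat_sin_def
  by (rule sums_unique[symmetric], rule osp_series[OF on, of "\<lambda>n. (-1)^n / fact (2*n+1)" "\<lambda>n. 2*n+1" sin])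
     (rule sin_paired)

lemma penrose_unique:
  fixes A :: "real^'m::finite^'n::finite" and X Y :: "real^'n^'m"
  assumes x1: "A ** X ** A = A" and x2: "X ** A ** X = X" and x3: "transpose (A ** X) = A ** X"
    and x4: "transpose (X ** A) = X ** A"
    and y1: "A ** Y ** A = A" and y2: "Y ** A ** Y = Y" and y3: "transpose (A ** Y) = A ** Y"
    and y4: "transpose (Y ** A) = Y ** A"
  shows "X = Y"
proof -
  have tA: "transpose A = transpose A ** (A ** Y)"
  proof -
    have "transpose A = transpose ((A ** Y) ** A)" using y1 by simp
    also have "\<dots> = transpose A ** transpose (A ** Y)" by (simp add: matrix_transpose_mul)
    finally show ?thesis using y3 by simp
  qed
  have "X = X ** (A ** X)" using x2 by (simp only: matrix_mul_assoc)
  also have "\<dots> = X ** transpose (A ** X)" using x3 by simp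
  also have "\<dots> = X ** (transpose X ** transpose A)" by (simp add: matrix_transpose_mul)
  also have "\<dots> = X ** (transpose X ** (transpose A ** (A ** Y)))" using tA by simp
  also have "\<dots> = (X ** transpose (A ** X)) ** (A ** Y)" by (simp only: matrix_transpose_mul matrix_mul_assoc)
  also have "\<dots> = (X ** (A ** X)) ** (A ** Y)" using x3 by simp
  also have "\<dots> = X ** (A ** Y)" using x2 by (simp only: matrix_mul_assoc)
  finally have X: "X = X ** (A ** Y)" .
  have tA': "transpose A = (X ** A) ** transpose A"
  proof -
    have "transpose A = transpose (A ** (X ** A))" using x1 by (simp only: matrix_mul_assoc)
    also have "\<dots> = transpose (X ** A) ** transpose A" by (simp add: matrix_transpose_mul)
    finally show ?thesis using x4 by simp
  qed
  have "Y = (Y ** A) ** Y" using y2 by simp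
  also have "\<dots> = transpose (Y ** A) ** Y" using y4 by simp
  also have "\<dots> = (transpose A ** transpose Y) ** Y" by (simp add: matrix_transpose_mul)
  also have "\<dots> = (((X ** A) ** transpose A) ** transpose Y) ** Y" using tA' by simp
  also have "\<dots> = (X ** A) ** (transpose (Y ** A) ** Y)" by (simp only: matrix_transpose_mul matrix_mul_assoc)
  also have "\<dots> = (X ** A) ** ((Y ** A) ** Y)" using y4 by simp
  also have "\<dots> = X ** (A ** Y)" using y2 by (simp only: matrix_mul_assoc)
  finally have Y: "Y = X ** (A ** Y)" .
  show ?thesis using X Y by simp
qed

lemma pinv_eq:
  fixes A :: "real^'m::finite^'n::finite" and X :: "real^'n^'m"
  assumes "A ** X ** A = A" "X ** A ** X = X" "transpose (A ** X) = A ** X" "transpose (X ** A) = X ** A"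
  shows "pinv A = X"
  unfolding pinv_def
proof (rule the_equality)
  show "A ** X ** A = A \<and> X ** A ** X = X \<and> transpose (A ** X) = A ** X \<and> transpose (X ** A) = X ** A"
    using assms by blast
  fix Y assume "A ** Y ** A = A \<and> Y ** A ** Y = Y \<and> transpose (A ** Y) = A ** Y \<and> transpose (Y ** A) = Y ** A"
  thus "Y = X" using penrose_unique[OF assms, of Y] by simp
qed

lemma osp_pinv:
  fixes u :: "'n::finite \<Rightarrow> real^'n" and g :: "'n \<Rightarrow> real"
  assumes on: "orthonormal u"
  shows "pinv (osp u g) = osp u (\<lambda>k. inverse (g k))"
proof (rule pinv_eq)
  have a: "\<And>k. g k * inverse (g k) * g k = g k" by (case_tac "g k = 0") auto
  have b: "\<And>k. inverse (g k) * g k * inverse (g k) = inverse (g k)" by (case_tac "g k = 0") auto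
  show "osp u g ** osp u (\<lambda>k. inverse (g k)) ** osp u g = osp u g"
    by (simp add: osp_mult[OF on] a)
  show "osp u (\<lambda>k. inverse (g k)) ** osp u g ** osp u (\<lambda>k. inverse (g k)) = osp u (\<lambda>k. inverse (g k))"
    by (simp add: osp_mult[OF on] b)
  show "transpose (osp u g ** osp u (\<lambda>k. inverse (g k))) = osp u g ** osp u (\<lambda>k. inverse (g k))"
    by (simp add: osp_mult[OF on] osp_transpose)
  show "transpose (osp u (\<lambda>k. inverse (g k)) ** osp u g) = osp u (\<lambda>k. inverse (g k)) ** osp u g"
    by (simp add: osp_mult[OF on] osp_transpose)
qed

lemma diagm_transpose: "transpose (diagm d) = diagm d"
  unfolding diagm_def transpose_def by (simp add: vec_eq_iff)

lemma lap_sym: "transpose (laplacian src tgt w) = laplacian src tgt w"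
  unfolding laplacian_def by (simp add: matrix_transpose_mul diagm_transpose matrix_mul_assoc)

lemma lap_entry:
  "laplacian src tgt w $ r $ c = (\<Sum>e\<in>UNIV. incidence src tgt $ r $ e * w e * incidence src tgt $ c $ e)"
  unfolding laplacian_def matrix_matrix_mult_def diagm_def transpose_def
  by (simp add: if_distrib sum.delta cong: if_cong)

lemma inc_sum:
  assumes "src e \<noteq> tgt e"
  shows "(\<Sum>r\<in>UNIV. incidence src tgt $ r $ e * x r) = x (src e) - x (tgt e)"
proof -
  have "(\<Sum>r\<in>UNIV. incidence src tgt $ r $ e * x r)
      = (\<Sum>r\<in>UNIV. (if r = src e then x r else 0) + (if r = tgt e then - x r else 0))"
    unfolding incidence_def using assms by (intro sum.cong) auto
  also have "\<dots> = (\<Sum>r\<in>UNIV. (if r = src e then x r else 0)) + (\<Sum>r\<in>UNIV. (if r = tgt e then - x r else 0))"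
    by (simp only: sum.distrib)
  also have "\<dots> = x (src e) - x (tgt e)" by simp
  finally show ?thesis .
qed

lemma inc_colsum:
  assumes "src e \<noteq> tgt e"
  shows "(\<Sum>r\<in>UNIV. incidence src tgt $ r $ e) = 0"
  using inc_sum[of src e tgt "\<lambda>_. 1"] assms by simp

lemma lap_quad:
  fixes x :: "real^'n::finite"
  assumes g: "wgraph src tgt w"
  shows "x \<bullet> (laplacian src tgt w *v x) = (\<Sum>e\<in>UNIV. w e * (x $ src e - x $ tgt e)^2)"
proof -
  have ne: "\<And>e. src e \<noteq> tgt e" using g by (simp add: wgraph_def)
  have "x \<bullet> (laplacian src tgt w *v x)
      = (\<Sum>r\<in>UNIV. x $ r * (\<Sum>c\<in>UNIV. (\<Sum>e\<in>UNIV. incidence src tgt $ r $ e * w e * incidence src tgt $ c $ e) * x $ c))"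
    by (simp add: inner_vec_def matrix_vector_mult_def lap_entry)
  also have "\<dots> = (\<Sum>e\<in>UNIV. w e * (\<Sum>r\<in>UNIV. incidence src tgt $ r $ e * x $ r) * (\<Sum>c\<in>UNIV. incidence src tgt $ c $ e * x $ c))"
    by (simp add: sum_distrib_left sum_distrib_right mult_ac) (subst sum.swap, rule sum.cong, simp, subst sum.swap, simp)
  also have "\<dots> = (\<Sum>e\<in>UNIV. w e * (x $ src e - x $ tgt e)^2)"
    by (simp add: inc_sum ne power2_eq_square mult.assoc)
  finally show ?thesis .
qed

lemma lap_one:
  assumes g: "wgraph src tgt w"
  shows "laplacian src tgt w *v (\<chi> i. 1) = 0"
proof -
  have ne: "\<And>e. src e \<noteq> tgt e" using g by (simp add: wgraph_def)
  have "(\<Sum>c\<in>UNIV. (\<Sum>e\<in>UNIV. incidence src tgt $ r $ e * w e * incidence src tgt $ c $ e)) = 0" for r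
  proof -
    have "(\<Sum>c\<in>UNIV. (\<Sum>e\<in>UNIV. incidence src tgt $ r $ e * w e * incidence src tgt $ c $ e))
        = (\<Sum>e\<in>UNIV. incidence src tgt $ r $ e * w e * (\<Sum>c\<in>UNIV. incidence src tgt $ c $ e * (\<lambda>_. 1) c))"
      by (subst sum.swap) (simp add: sum_distrib_left)
    also have "\<dots> = 0" by (simp add: inc_colsum ne)
    finally show ?thesis .
  qed
  thus ?thesis by (simp add: vec_eq_iff matrix_vector_mult_def lap_entry)
qed

lemma lap_kernel:
  fixes x :: "real^'n::finite"
  assumes g: "wgraph src tgt w" and c: "connected_graph src tgt" and k: "laplacian src tgt w *v x = 0"
  shows "x $ i = x $ j"
proof -
  have wp: "\<And>e. w e > 0" using g by (simp add: wgraph_def)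
  have "(\<Sum>e\<in>UNIV. w e * (x $ src e - x $ tgt e)^2) = 0"
    using lap_quad[OF g, of x] k by simp
  hence "\<forall>e\<in>UNIV. w e * (x $ src e - x $ tgt e)^2 = 0"
    by (subst sum_nonneg_eq_0_iff[symmetric]) (auto intro: mult_nonneg_nonneg less_imp_le[OF wp])
  hence eq: "\<And>e. x $ src e = x $ tgt e" using wp by (metis UNIV_I mult_eq_0_iff power_eq_0_iff order_less_irrefl right_minus_eq)
  have adj: "\<And>a b. adjacent src tgt a b \<Longrightarrow> x $ a = x $ b"
  proof -
    fix a b assume "adjacent src tgt a b"
    then obtain e where "{src e, tgt e} = {a, b}" unfolding adjacent_def by blast
    hence "(src e = a \<and> tgt e = b) \<or> (src e = b \<and> tgt e = a)" by (auto simp: doubleton_eq_iff)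
    thus "x $ a = x $ b" using eq[of e] by auto
  qed
  have "(adjacent src tgt)\<^sup>*\<^sup>* i j" using c by (simp add: connected_graph_def)
  thus ?thesis
  proof (induction rule: rtranclp_induct)
    case base show ?case by simp
  next
    case (step y z) thus ?case using adj by simp
  qed
qed

lemma vec_expand:
  fixes u :: "'n::finite \<Rightarrow> real^'n" and x :: "real^'n"
  assumes on: "orthonormal u"
  shows "x $ r = (\<Sum>k\<in>UNIV. (u k \<bullet> x) * u k $ r)"
proof -
  have "(\<Sum>k\<in>UNIV. (u k \<bullet> x) * u k $ r) = (\<Sum>k\<in>UNIV. \<Sum>s\<in>UNIV. u k $ r * u k $ s * x $ s)"
    by (simp add: inner_vec_def sum_distrib_left sum_distrib_right mult_ac)
  also have "\<dots> = (\<Sum>s\<in>UNIV. (\<Sum>k\<in>UNIV. u k $ r * u k $ s) * x $ s)"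
    by (subst sum.swap) (simp add: sum_distrib_right)
  also have "\<dots> = (\<Sum>s\<in>UNIV. (if r = s then x $ s else 0))"
    by (rule sum.cong) (simp_all add: on_complete[OF on])
  also have "\<dots> = x $ r" by simp
  finally show ?thesis by simp
qed

lemma on_unit: "orthonormal u \<Longrightarrow> u k \<bullet> u k = 1"
  unfolding orthonormal_def by simp

lemma on_nz: "orthonormal u \<Longrightarrow> u k \<noteq> 0"
  using on_unit[of u k] by auto

lemma mu_inner:
  fixes u :: "'n::finite \<Rightarrow> real^'n"
  assumes on: "orthonormal u" and ev: "A *v u k = \<mu> k *\<^sub>R u k"
  shows "\<mu> k = u k \<bullet> (A *v u k)"
  using on_unit[OF on, of k] ev by simp

lemma mu_nonneg:
  fixes u :: "'n::finite \<Rightarrow> real^'n"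
  assumes g: "wgraph src tgt w" and on: "orthonormal u"
    and ev: "laplacian src tgt w *v u k = \<mu> k *\<^sub>R u k"
  shows "\<mu> k \<ge> 0"
proof -
  have wp: "\<And>e. w e > 0" using g by (simp add: wgraph_def)
  have "\<mu> k = (\<Sum>e\<in>UNIV. w e * (u k $ src e - u k $ tgt e)^2)"
    using mu_inner[where A="laplacian src tgt w" and u=u and \<mu>=\<mu> and k=k, OF on ev] lap_quad[OF g] by simp
  also have "\<dots> \<ge> 0" by (intro sum_nonneg mult_nonneg_nonneg) (auto intro: less_imp_le[OF wp])
  finally show ?thesis .
qed

lemma eig_range:
  fixes u :: "'n::finite \<Rightarrow> real^'n" and A :: "real^'n^'n"
  assumes sym: "transpose A = A" and on: "orthonormal u" and ev: "\<And>k. A *v u k = \<mu> k *\<^sub>R u k"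
    and l: "is_eigenvalue A l"
  shows "l \<in> range \<mu>"
proof -
  obtain x where x: "x \<noteq> 0" "A *v x = l *\<^sub>R x" using l by (auto simp: is_eigenvalue_def)
  have "\<exists>k. u k \<bullet> x \<noteq> 0"
  proof (rule ccontr)
    assume "\<not> (\<exists>k. u k \<bullet> x \<noteq> 0)"
    hence "\<And>r. x $ r = 0" using vec_expand[OF on, of x] by simp
    hence "x = 0" by (simp add: vec_eq_iff)
    thus False using x by simp
  qed
  then obtain k where k: "u k \<bullet> x \<noteq> 0" by blast
  have "l * (u k \<bullet> x) = u k \<bullet> (A *v x)" using x by simp
  also have "\<dots> = (A *v u k) \<bullet> x" by (rule sym_inner[OF sym])
  also have "\<dots> = \<mu> k * (u k \<bullet> x)" using ev by simp
  finally have "l = \<mu> k" using k by simp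
  thus ?thesis by simp
qed

lemma mu_le_max:
  fixes u :: "'n::finite \<Rightarrow> real^'n" and A :: "real^'n^'n"
  assumes sym: "transpose A = A" and on: "orthonormal u" and ev: "\<And>k. A *v u k = \<mu> k *\<^sub>R u k"
  shows "\<mu> k \<le> lambda_max A"
proof -
  have sub: "{l. is_eigenvalue A l} \<subseteq> range \<mu>" using eig_range[OF sym on ev] by blast
  hence fin: "finite {l. is_eigenvalue A l}" by (rule finite_subset) simp
  have "is_eigenvalue A (\<mu> k)" unfolding is_eigenvalue_def using on_nz[OF on, of k] ev by blast
  thus ?thesis unfolding lambda_max_def using fin by (intro Max_ge) auto
qed

lemma cent_apply:
  "(centering *v x) $ r = x $ r - (\<Sum>c\<in>UNIV. x $ c) / real CARD('n::finite)"
  for x :: "real^'n"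
proof -
  have "(centering *v x) $ r = (\<Sum>c\<in>UNIV. (if r = c then x $ c else 0) - x $ c / real CARD('n))"
    unfolding centering_def matrix_vector_mult_def by (simp, rule sum.cong) (auto simp: algebra_simps)
  also have "\<dots> = x $ r - (\<Sum>c\<in>UNIV. x $ c) / real CARD('n)"
    by (simp add: sum_subtractf sum_divide_distrib)
  finally show ?thesis .
qed

lemma cent_osp:
  fixes u :: "'n::finite \<Rightarrow> real^'n"
  assumes g: "wgraph src tgt w" and c: "connected_graph src tgt" and on: "orthonormal u"
    and ev: "\<And>k. laplacian src tgt w *v u k = \<mu> k *\<^sub>R u k"
  shows "centering = osp u (\<lambda>k. if \<mu> k = 0 then 0 else 1)"
proof (rule osp_eig[OF on])
  fix k
  show "centering *v u k = (if \<mu> k = 0 then 0 else 1) *\<^sub>R u k"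
  proof (cases "\<mu> k = 0")
    case True
    hence "laplacian src tgt w *v u k = 0" using ev by simp
    hence const: "\<And>i j. u k $ i = u k $ j" using lap_kernel[OF g c] by blast
    have "\<And>r. (centering *v u k) $ r = 0"
    proof -
      fix r
      have "(\<Sum>c\<in>UNIV. u k $ c) = (\<Sum>c\<in>(UNIV::'n set). u k $ r)" by (rule sum.cong) (use const in auto)
      hence "(\<Sum>c\<in>UNIV. u k $ c) = real CARD('n) * u k $ r" by simp
      thus "(centering *v u k) $ r = 0" by (simp add: cent_apply)
    qed
    thus ?thesis using True by (simp add: vec_eq_iff)
  next
    case False
    have "(\<chi> i. 1) \<bullet> (laplacian src tgt w *v u k) = (laplacian src tgt w *v (\<chi> i. 1)) \<bullet> u k"
      by (rule sym_inner[OF lap_sym])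
    also have "\<dots> = 0" by (simp add: lap_one[OF g])
    finally have "\<mu> k * ((\<chi> i. 1) \<bullet> u k) = 0" using ev[of k] by simp
    hence "(\<chi> i. 1) \<bullet> u k = 0" using False by simp
    hence s0: "(\<Sum>c\<in>UNIV. u k $ c) = 0" by (simp add: inner_vec_def)
    show ?thesis using False by (simp add: vec_eq_iff cent_apply s0)
  qed
qed

lemma eff_res_osp:
  fixes u :: "'n::finite \<Rightarrow> real^'n" and g :: "'n \<Rightarrow> real"
  assumes on: "orthonormal u"
  shows "eff_res (osp u g) i j = (\<Sum>k\<in>UNIV. inverse (g k) * (u k $ i - u k $ j)^2)"
  unfolding eff_res_def osp_pinv[OF on]
  by (simp add: osp_def sum_subtractf[symmetric] sum.distrib[symmetric] sum_distrib_left power2_eq_square algebra_simps)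

lemma rhs_value:
  fixes u :: "'n::finite \<Rightarrow> real^'n"
  assumes g: "wgraph src tgt w" and c: "connected_graph src tgt" and on: "orthonormal u"
    and ev: "\<And>k. laplacian src tgt w *v u k = \<mu> k *\<^sub>R u k"
    and t: "\<tau> \<ge> 0" and tl: "\<tau> * lambda_max (laplacian src tgt w) < pi / 2"
  shows "eff_res (laplacian src tgt w ** matrix_inv (mat_cos (\<tau> *\<^sub>R laplacian src tgt w))
                 ** (centering - mat_sin (\<tau> *\<^sub>R laplacian src tgt w))) i j
       = (\<Sum>k\<in>UNIV. (if \<mu> k = 0 then 0 else cos (\<tau> * \<mu> k) / (\<mu> k * (1 - sin (\<tau> * \<mu> k))))
                     * (u k $ i - u k $ j)^2)"
proof -
  have L: "laplacian src tgt w = osp u \<mu>" by (rule osp_eig[OF on ev])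
  have range: "\<And>k. 0 \<le> \<tau> * \<mu> k \<and> \<tau> * \<mu> k < pi / 2"
  proof -
    fix k
    have m0: "\<mu> k \<ge> 0" by (rule mu_nonneg[OF g on ev])
    have "\<mu> k \<le> lambda_max (laplacian src tgt w)" by (rule mu_le_max[OF lap_sym on ev])
    hence "\<tau> * \<mu> k \<le> \<tau> * lambda_max (laplacian src tgt w)" using t by (rule mult_left_mono)
    thus "0 \<le> \<tau> * \<mu> k \<and> \<tau> * \<mu> k < pi / 2" using tl t m0 by simp
  qed
  have cpos: "\<And>k. cos (\<tau> * \<mu> k) > 0" using range by (intro cos_gt_zero_pi) (auto intro: less_le_trans[of _ 0])
  have cosL: "mat_cos (\<tau> *\<^sub>R laplacian src tgt w) = osp u (\<lambda>k. cos (\<tau> * \<mu> k))"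
    unfolding L osp_scaleR by (rule osp_cos[OF on])
  have sinL: "mat_sin (\<tau> *\<^sub>R laplacian src tgt w) = osp u (\<lambda>k. sin (\<tau> * \<mu> k))"
    unfolding L osp_scaleR by (rule osp_sin[OF on])
  have invL: "matrix_inv (mat_cos (\<tau> *\<^sub>R laplacian src tgt w)) = osp u (\<lambda>k. inverse (cos (\<tau> * \<mu> k)))"
    unfolding cosL by (rule osp_inv[OF on]) (use cpos in \<open>auto simp: less_imp_neq[symmetric]\<close>)
  have X: "laplacian src tgt w ** matrix_inv (mat_cos (\<tau> *\<^sub>R laplacian src tgt w))
                 ** (centering - mat_sin (\<tau> *\<^sub>R laplacian src tgt w))
      = osp u (\<lambda>k. \<mu> k * inverse (cos (\<tau> * \<mu> k)) * ((if \<mu> k = 0 then 0 else 1) - sin (\<tau> * \<mu> k)))"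
    unfolding invL sinL cent_osp[OF g c on ev] osp_diff
    by (subst L) (simp add: osp_mult[OF on])
  have iv: "\<And>k. inverse (\<mu> k * inverse (cos (\<tau> * \<mu> k)) * ((if \<mu> k = 0 then 0 else 1) - sin (\<tau> * \<mu> k)))
      = (if \<mu> k = 0 then 0 else cos (\<tau> * \<mu> k) / (\<mu> k * (1 - sin (\<tau> * \<mu> k))))"
    by (simp add: field_simps)
  show ?thesis unfolding X eff_res_osp[OF on] iv ..
qed

lemma M_osp:
  fixes u :: "'n::finite \<Rightarrow> real^'n" and L :: "real^'n^'n"
  assumes on: "orthonormal u" and L: "L = osp u \<mu>"
  shows "(\<chi> i j. (if i = j then s else 0) + c * complex_of_real (L $ i $ j))
       = osp u (\<lambda>k. s + c * complex_of_real (\<mu> k))"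
proof -
  have "(\<Sum>k\<in>UNIV. (s + c * complex_of_real (\<mu> k)) * of_real (u k $ i * u k $ j))
      = s * of_real (\<Sum>k\<in>UNIV. u k $ i * u k $ j) + c * of_real (\<Sum>k\<in>UNIV. \<mu> k * (u k $ i * u k $ j))" for i j
    by (simp add: algebra_simps sum.distrib sum_distrib_left of_real_sum)
  thus ?thesis unfolding L osp_def by (simp add: vec_eq_iff on_complete[OF on])
qed

lemma cmat_neg: "cmat (- A) = - cmat A"
  unfolding cmat_def by (simp add: vec_eq_iff)

lemma G_tail_entry:
  fixes P :: "complex^'n::finite^'n" and E :: "real^'e::finite^'n"
  shows "(P ** cmat (- E) ** cmat (diagm (\<chi> e. sqrt (v e)))) $ r $ f
       = - (of_real (sqrt (v f)) * (\<Sum>i\<in>UNIV. P $ r $ i * of_real (E $ i $ f)))"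
  unfolding cmat_def diagm_def matrix_matrix_mult_def
  by (simp add: if_distrib sum.delta cong: if_cong) (simp add: sum_negf sum_distrib_left mult_ac)

lemma osp_inc_entry:
  fixes u :: "'n::finite \<Rightarrow> real^'n" and \<gamma> :: "'n \<Rightarrow> complex"
  assumes ne: "src f \<noteq> tgt f"
  shows "(\<Sum>i\<in>UNIV. osp u \<gamma> $ r $ i * of_real (incidence src tgt $ i $ f))
       = (\<Sum>k\<in>UNIV. \<gamma> k * of_real (u k $ src f - u k $ tgt f) * of_real (u k $ r))"
proof -
  have "(\<Sum>i\<in>UNIV. osp u \<gamma> $ r $ i * of_real (incidence src tgt $ i $ f))
      = (\<Sum>k\<in>UNIV. \<gamma> k * of_real (u k $ r) * of_real (\<Sum>i\<in>UNIV. incidence src tgt $ i $ f * u k $ i))"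
    unfolding osp_def
    by (simp add: sum_distrib_right sum_distrib_left of_real_sum mult_ac) (rule sum.swap)
  also have "\<dots> = (\<Sum>k\<in>UNIV. \<gamma> k * of_real (u k $ src f - u k $ tgt f) * of_real (u k $ r))"
    using inc_sum[of src f tgt "\<lambda>i. u _ $ i"] ne by (simp add: mult_ac)
  finally show ?thesis .
qed

lemma norm_sum_on:
  fixes u :: "'n::finite \<Rightarrow> real^'n" and a :: "'n \<Rightarrow> complex"
  assumes on: "orthonormal u"
  shows "(\<Sum>r\<in>UNIV. cnj (\<Sum>k\<in>UNIV. a k * of_real (u k $ r)) * (\<Sum>k\<in>UNIV. a k * of_real (u k $ r)))
       = of_real (\<Sum>k\<in>UNIV. (cmod (a k))^2)"
proof -
  have "(\<Sum>r\<in>UNIV. cnj (\<Sum>k\<in>UNIV. a k * of_real (u k $ r)) * (\<Sum>k\<in>UNIV. a k * of_real (u k $ r)))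
      = (\<Sum>r\<in>UNIV. \<Sum>k\<in>UNIV. \<Sum>l\<in>UNIV. (a k * cnj (a l)) * of_real (u k $ r * u l $ r))"
    by (simp add: sum_product mult_ac)
  also have "\<dots> = (\<Sum>k\<in>UNIV. \<Sum>l\<in>UNIV. (a k * cnj (a l)) * of_real (\<Sum>r\<in>UNIV. u k $ r * u l $ r))"
    by (subst sum.swap, rule sum.cong, simp, subst sum.swap) (simp add: of_real_sum sum_distrib_left)
  also have "\<dots> = (\<Sum>k\<in>UNIV. a k * cnj (a k))"
    by (simp add: on_inner[OF on] if_distrib sum.delta cong: if_cong)
  also have "\<dots> = of_real (\<Sum>k\<in>UNIV. (cmod (a k))^2)"
    by (simp only: of_real_sum complex_norm_square)
  finally show ?thesis .
qed

lemma trace_adj: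
  fixes G :: "complex^'e::finite^'n::finite"
  shows "trace (cadj G ** G) = (\<Sum>f\<in>UNIV. \<Sum>r\<in>UNIV. cnj (G $ r $ f) * G $ r $ f)"
  unfolding trace_def cadj_def matrix_matrix_mult_def by simp

lemma integrand_formula:
  fixes u :: "'n::finite \<Rightarrow> real^'n" and src tgt :: "'e::finite \<Rightarrow> 'n"
  assumes g: "wgraph src tgt w" and c: "connected_graph src tgt" and on: "orthonormal u"
    and ev: "\<And>k. laplacian src tgt w *v u k = \<mu> k *\<^sub>R u k"
    and s0: "s \<noteq> 0" and nz: "\<And>k. \<mu> k \<noteq> 0 \<Longrightarrow> aa (\<mu> k) \<tau> s \<noteq> 0"
  shows "Re (trace (cadj (transfer src tgt w \<tau> v s) ** transfer src tgt w \<tau> v s))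
    = (\<Sum>f\<in>UNIV. \<Sum>k\<in>UNIV. (sqrt (v f) * (u k $ src f - u k $ tgt f))^2
          * (if \<mu> k = 0 then 0 else 1 / (cmod (aa (\<mu> k) \<tau> s))^2))"
proof -
  have ne: "\<And>f. src f \<noteq> tgt f" using g by (simp add: wgraph_def)
  have L: "laplacian src tgt w = osp u \<mu>" by (rule osp_eig[OF on ev])
  define e where "e = exp (- (complex_of_real \<tau> * s))"
  have aae: "\<And>k. aa (\<mu> k) \<tau> s = s + e * complex_of_real (\<mu> k)"
    unfolding aa_def e_def by (simp add: mult.commute)
  have M: "(\<chi> i j. (if i = j then s else 0) + e * complex_of_real (laplacian src tgt w $ i $ j))
       = osp u (\<lambda>k. s + e * complex_of_real (\<mu> k))" by (rule M_osp[OF on L])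
  have nz': "\<And>k. s + e * complex_of_real (\<mu> k) \<noteq> 0"
    using nz s0 aae by (case_tac "\<mu> k = 0") auto
  define \<gamma> where "\<gamma> = (\<lambda>k. complex_of_real (if \<mu> k = 0 then 0 else 1) * inverse (s + e * complex_of_real (\<mu> k)))"
  have P: "cmat centering ** matrix_inv (\<chi> i j. (if i = j then s else 0) + e * complex_of_real (laplacian src tgt w $ i $ j))
      = osp u \<gamma>"
    unfolding M cent_osp[OF g c on ev] cmat_osp osp_inv[OF on nz'] osp_mult[OF on] \<gamma>_def by simp
  define a where "a = (\<lambda>f k. - (complex_of_real (sqrt (v f)) * \<gamma> k * of_real (u k $ src f - u k $ tgt f)))"
  have G: "transfer src tgt w \<tau> v s $ r $ f = (\<Sum>k\<in>UNIV. a f k * of_real (u k $ r))" for r f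
  proof -
    have "transfer src tgt w \<tau> v s $ r $ f
        = - (of_real (sqrt (v f)) * (\<Sum>i\<in>UNIV. osp u \<gamma> $ r $ i * of_real (incidence src tgt $ i $ f)))"
      unfolding transfer_def e_def[symmetric] P by (rule G_tail_entry)
    also have "\<dots> = (\<Sum>k\<in>UNIV. a f k * of_real (u k $ r))"
      unfolding osp_inc_entry[of src f tgt, OF ne[of f]] a_def by (simp add: sum_distrib_left sum_negf mult_ac)
    finally show ?thesis .
  qed
  have "trace (cadj (transfer src tgt w \<tau> v s) ** transfer src tgt w \<tau> v s)
      = (\<Sum>f\<in>UNIV. of_real (\<Sum>k\<in>UNIV. (cmod (a f k))^2))"
    unfolding trace_adj G norm_sum_on[OF on] ..
  hence "Re (trace (cadj (transfer src tgt w \<tau> v s) ** transfer src tgt w \<tau> v s))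
      = (\<Sum>f\<in>UNIV. \<Sum>k\<in>UNIV. (cmod (a f k))^2)" by (simp add: Re_sum)
  also have "\<dots> = (\<Sum>f\<in>UNIV. \<Sum>k\<in>UNIV. (sqrt (v f) * (u k $ src f - u k $ tgt f))^2
          * (if \<mu> k = 0 then 0 else 1 / (cmod (aa (\<mu> k) \<tau> s))^2))"
  proof (intro sum.cong refl)
    fix f k
    have "(cmod (a f k))^2 = (sqrt (v f) * (u k $ src f - u k $ tgt f))^2 * (cmod (\<gamma> k))^2"
      unfolding a_def by (simp add: norm_mult power_mult_distrib norm_of_real del: of_real_diff)
    also have "(cmod (\<gamma> k))^2 = (if \<mu> k = 0 then 0 else 1 / (cmod (aa (\<mu> k) \<tau> s))^2)"
      unfolding \<gamma>_def aae by (simp add: norm_inverse power_inverse divide_inverse)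
    finally show "(cmod (a f k))^2 = (sqrt (v f) * (u k $ src f - u k $ tgt f))^2
          * (if \<mu> k = 0 then 0 else 1 / (cmod (aa (\<mu> k) \<tau> s))^2)" .
  qed
  finally show ?thesis .
qed

lemma aa_axis_nz:
  fixes m t :: real
  assumes m: "m > 0" and t: "t \<ge> 0" and tm: "t * m < pi / 2"
  shows "aa m t (\<i> * of_real y) \<noteq> 0"
proof -
  obtain \<delta> where d0: "\<delta> > 0" and d1: "t * m * exp (t * \<delta>) < pi / 2"
      and d2: "\<delta> < m * cos (t * m * exp (t * \<delta>))"
    using delta_exists[OF m t tm] by blast
  show ?thesis by (rule aa_nz[OF m t d1 d2 d0]) (use d0 in simp)
qed

lemma mu_range:
  fixes u :: "'n::finite \<Rightarrow> real^'n"
  assumes g: "wgraph src tgt w" and on: "orthonormal u"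
    and ev: "\<And>k. laplacian src tgt w *v u k = \<mu> k *\<^sub>R u k"
    and t: "\<tau> \<ge> 0" and tl: "\<tau> * lambda_max (laplacian src tgt w) < pi / 2"
  shows "0 \<le> \<mu> k \<and> \<tau> * \<mu> k < pi / 2"
proof -
  have m0: "\<mu> k \<ge> 0" by (rule mu_nonneg[OF g on ev])
  have "\<mu> k \<le> lambda_max (laplacian src tgt w)" by (rule mu_le_max[OF lap_sym on ev])
  hence "\<tau> * \<mu> k \<le> \<tau> * lambda_max (laplacian src tgt w)" using t by (rule mult_left_mono)
  thus ?thesis using tl m0 by simp
qed

lemma rho_formula:
  fixes u :: "'n::finite \<Rightarrow> real^'n" and src tgt :: "'e::finite \<Rightarrow> 'n"
  assumes g: "wgraph src tgt w" and c: "connected_graph src tgt" and on: "orthonormal u"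
    and ev: "\<And>k. laplacian src tgt w *v u k = \<mu> k *\<^sub>R u k"
    and t: "\<tau> \<ge> 0" and tl: "\<tau> * lambda_max (laplacian src tgt w) < pi / 2"
    and vp: "\<And>f. v f \<ge> 0"
  shows "rho_ss src tgt w \<tau> v = (\<Sum>f\<in>UNIV. v f * ((1/2) * (\<Sum>k\<in>UNIV.
            (if \<mu> k = 0 then 0 else cos (\<tau> * \<mu> k) / (\<mu> k * (1 - sin (\<tau> * \<mu> k))))
            * (u k $ src f - u k $ tgt f)^2)))"
proof -
  define nu where "nu = (\<lambda>k. if \<mu> k = 0 then 0 else cos (\<tau> * \<mu> k) / (\<mu> k * (1 - sin (\<tau> * \<mu> k))))"
  define \<psi> where "\<psi> = (\<lambda>k (\<omega>::real). if \<mu> k = 0 then 0 else 1 / (cmod (aa (\<mu> k) \<tau> (\<i> * of_real \<omega>)))^2)"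
  define cf where "cf = (\<lambda>f k. (sqrt (v f) * (u k $ src f - u k $ tgt f))^2)"
  have rng: "\<And>k. 0 \<le> \<mu> k \<and> \<tau> * \<mu> k < pi / 2" by (rule mu_range[OF g on ev t tl])
  have psi_int: "\<And>k. (\<psi> k has_integral (pi * nu k)) UNIV"
  proof -
    fix k
    show "(\<psi> k has_integral (pi * nu k)) UNIV"
    proof (cases "\<mu> k = 0")
      case True thus ?thesis by (simp add: \<psi>_def nu_def)
    next
      case False
      hence mp: "\<mu> k > 0" using rng[of k] by simp
      have tm: "\<tau> * \<mu> k < pi / 2" using rng[of k] by simp
      have "((\<lambda>y. 1 / (cmod (aa (\<mu> k) \<tau> (\<i> * of_real y)))^2) has_integral
           pi * cos (\<tau> * \<mu> k) / (\<mu> k * (1 - sin (\<tau> * \<mu> k)))) UNIV"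
        by (rule scalar_integral[OF mp t tm])
      thus ?thesis using False by (simp add: \<psi>_def nu_def)
    qed
  qed
  have sum_int: "((\<lambda>\<omega>. \<Sum>f\<in>UNIV. \<Sum>k\<in>UNIV. cf f k * \<psi> k \<omega>) has_integral
        (\<Sum>f\<in>UNIV. \<Sum>k\<in>UNIV. cf f k * (pi * nu k))) UNIV"
    by (intro has_integral_sum has_integral_mult_right psi_int) auto
  have integrand: "\<And>\<omega>. \<omega> \<in> UNIV - {0} \<Longrightarrow>
      Re (trace (cadj (transfer src tgt w \<tau> v (\<i> * complex_of_real \<omega>)) ** transfer src tgt w \<tau> v (\<i> * complex_of_real \<omega>)))
      = (\<Sum>f\<in>UNIV. \<Sum>k\<in>UNIV. cf f k * \<psi> k \<omega>)"
  proof -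
    fix \<omega> :: real assume "\<omega> \<in> UNIV - {0}"
    hence w0: "\<omega> \<noteq> 0" by simp
    have "Re (trace (cadj (transfer src tgt w \<tau> v (\<i> * complex_of_real \<omega>)) ** transfer src tgt w \<tau> v (\<i> * complex_of_real \<omega>)))
      = (\<Sum>f\<in>UNIV. \<Sum>k\<in>UNIV. (sqrt (v f) * (u k $ src f - u k $ tgt f))^2
          * (if \<mu> k = 0 then 0 else 1 / (cmod (aa (\<mu> k) \<tau> (\<i> * complex_of_real \<omega>)))^2))"
    proof (rule integrand_formula[OF g c on ev])
      show "\<i> * complex_of_real \<omega> \<noteq> 0" using w0 by simp
      fix k assume "\<mu> k \<noteq> 0"
      hence "\<mu> k > 0" using rng[of k] by simp
      thus "aa (\<mu> k) \<tau> (\<i> * complex_of_real \<omega>) \<noteq> 0" using rng[of k] t by (intro aa_axis_nz) auto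
    qed
    thus "?thesis \<omega>" by (simp add: cf_def \<psi>_def)
  qed
  have "((\<lambda>\<omega>. Re (trace (cadj (transfer src tgt w \<tau> v (\<i> * complex_of_real \<omega>)) ** transfer src tgt w \<tau> v (\<i> * complex_of_real \<omega>))))
      has_integral (\<Sum>f\<in>UNIV. \<Sum>k\<in>UNIV. cf f k * (pi * nu k))) UNIV"
    by (rule has_integral_spike[OF negligible_sing integrand sum_int]) 
  hence "rho_ss src tgt w \<tau> v = 1 / (2 * pi) * (\<Sum>f\<in>UNIV. \<Sum>k\<in>UNIV. cf f k * (pi * nu k))"
    unfolding rho_ss_def by (simp add: integral_unique)
  also have "\<dots> = (\<Sum>f\<in>UNIV. v f * ((1/2) * (\<Sum>k\<in>UNIV. nu k * (u k $ src f - u k $ tgt f)^2)))"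
  proof -
    have cf_eq: "\<And>f k. cf f k = v f * (u k $ src f - u k $ tgt f)^2"
      using vp by (simp add: cf_def power_mult_distrib)
    show ?thesis unfolding cf_eq by (simp add: sum_distrib_left field_simps)
  qed
  finally show ?thesis unfolding nu_def .
qed

theorem theorem10:
  fixes src tgt :: "'e::finite \<Rightarrow> 'n::finite"
    and w :: "'e \<Rightarrow> real" and \<tau> :: real and v :: "'e \<Rightarrow> real" and e :: 'e
  assumes "wgraph src tgt w"
    and "connected_graph src tgt"
    and "\<tau> \<ge> 0"
    and "\<tau> * lambda_max (laplacian src tgt w) < pi / 2"
    and "\<forall>f. v f > 0"
  shows "((\<lambda>s. rho_ss src tgt w \<tau> (v(e := s))) has_real_derivative
            (1 / 2) * eff_res
               (laplacian src tgt w ** matrix_inv (mat_cos (\<tau> *\<^sub>R laplacian src tgt w))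
                 ** (centering - mat_sin (\<tau> *\<^sub>R laplacian src tgt w)))
               (src e) (tgt e))
         (at (v e))"
proof -
  obtain u :: "'n \<Rightarrow> real^'n" and \<mu> where on0: "\<And>i j. u i \<bullet> u j = (if i = j then 1 else 0)"
    and ev: "\<And>i. laplacian src tgt w *v u i = \<mu> i *\<^sub>R u i"
    using spectral[OF lap_sym] by blast
  have on: "orthonormal u" unfolding orthonormal_def using on0 by blast
  define nu where "nu = (\<lambda>k. if \<mu> k = 0 then 0 else cos (\<tau> * \<mu> k) / (\<mu> k * (1 - sin (\<tau> * \<mu> k))))"
  define C where "C = (\<lambda>f. (1/2) * (\<Sum>k\<in>UNIV. nu k * (u k $ src f - u k $ tgt f)^2))"
  have rhs: "(1 / 2) * eff_res
               (laplacian src tgt w ** matrix_inv (mat_cos (\<tau> *\<^sub>R laplacian src tgt w))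
                 ** (centering - mat_sin (\<tau> *\<^sub>R laplacian src tgt w)))
               (src e) (tgt e) = C e"
    unfolding rhs_value[OF assms(1,2) on ev assms(3,4)] C_def nu_def ..
  define K where "K = (\<Sum>f\<in>UNIV. v f * C f)"
  have eqS: "K + (s - v e) * C e = rho_ss src tgt w \<tau> (v(e := s))" if s: "s \<in> {0<..}" for s
  proof -
    have vp: "\<And>f. (v(e := s)) f \<ge> 0" using s assms(5) by (auto intro: less_imp_le)
    have "rho_ss src tgt w \<tau> (v(e := s)) = (\<Sum>f\<in>UNIV. (v(e := s)) f * C f)"
      unfolding rho_formula[OF assms(1,2) on ev assms(3,4) vp] C_def nu_def ..
    also have "\<dots> = (\<Sum>f\<in>UNIV. v f * C f + (if f = e then (s - v e) * C e else 0))"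
      by (rule sum.cong) (auto simp: algebra_simps)
    also have "\<dots> = K + (s - v e) * C e" by (simp add: sum.distrib K_def)
    finally show ?thesis by simp
  qed
  have der: "((\<lambda>s. K + (s - v e) * C e) has_real_derivative C e) (at (v e))"
    by (auto intro!: derivative_eq_intros)
  have "((\<lambda>s. rho_ss src tgt w \<tau> (v(e := s))) has_real_derivative C e) (at (v e))"
    by (rule has_field_derivative_transform_within_open[OF der open_greaterThan]) (use assms(5) eqS in auto)
  thus ?thesis unfolding rhs .
qed

end
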